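(* Let $\mathcal D$ be a semicartesian symmetric monoidal category. Then the following are equivalent: (1) $\mathcal D$ can be made into a Markov category (i.e. there exist morphisms $\mathrm{copy}_X\colon X\to X\otimes X$ for all objects $X$ which, together with the unique morphisms $\mathrm{del}_X\colon X\to I$, make $\mathcal D$ a Markov category) in which, for every object $X$, the copy morphism $\mathrm{copy}_X$ is an initial dilation of $\mathrm{id}_X$. (2) For every object $X$, the identity $\mathrm{id}_X$ admits an initial dilation $\iota\colon X\to X\otimes E$ such that the marginal $(\mathrm{del}_X\otimes\mathrm{id}_E)\circ\iota\colon X\to E$ is non-creative. Moreover, if these conditions hold, then the Markov category structure in (1) is unique.
   Context: A symmetric monoidal category $(\mathcal D,\otimes,I)$ is semicartesian if the unit $I$ is terminal; write $\mathrm{del}_X\colon X\to I$ for the unique morphism (unitors suppressed). A Markov category is a symmetric monoidal category in which every object $X$ carries morphisms $\mathrm{copy}_X\colon X\to X\otimes X$ and $\mathrm{del}_X\colon X\to I$ forming a commutative comonoid, compatible with the monoidal structure ($\mathrm{copy}_{X\otimes Y}$ is $\mathrm{copy}_X\otimes\mathrm{copy}_Y$ followed by swapping the middle factors, $\mathrm{del}_{X\otimes Y}=\mathrm{del}_X\otimes\mathrm{del}_Y$), with $I$ terminal. In a semicartesian category: a dilation of $p\colon A\to X$ is a morphism $\pi\colon A\to X\otimes E$ for some object $E$ (the environment) with $(\mathrm{id}_X\otimes\mathrm{del}_E)\circ\pi=p$. Given a dilation $\pi\colon A\to X\otimes E$ of $p$ and morphisms $f_1,f_2\colon E\to E'$,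 say $f_1$ and $f_2$ are $\pi$-dilationally equal if for every dilation $\rho\colon A\to X\otimes E\otimes F$ of $\pi$ one has $(\mathrm{id}_X\otimes f_1\otimes\mathrm{id}_F)\circ\rho=(\mathrm{id}_X\otimes f_2\otimes\mathrm{id}_F)\circ\rho$. A dilation $\pi\colon A\to X\otimes E$ of $p$ is initial if for every dilation $\pi'\colon A\to X\otimes E'$ of $p$ there exists $f\colon E\to E'$ with $(\mathrm{id}_X\otimes f)\circ\pi=\pi'$, and any two such $f$ are $\pi$-dilationally equal. A morphism $p\colon A\to X$ is non-creative if every dilation $\pi\colon A\to X\otimes E$ of $p$ is of the form $\pi=(p\otimes\mathrm{id}_E)\circ\iota$ for some dilation $\iota\colon A\to A\otimes E$ of $\mathrm{id}_A$. *)

theory Defs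
  imports Main
begin

text \<open>Morphisms are elements of type 'm, objects of type 'o; hom-sets are given explicitly.
  cmp g f is the composite "g after f".\<close>

record ('o, 'm) smc =
  obs :: "'o set"
  hom :: "'o \<Rightarrow> 'o \<Rightarrow> 'm set"
  cmp :: "'m \<Rightarrow> 'm \<Rightarrow> 'm"
  idt :: "'o \<Rightarrow> 'm"
  tob :: "'o \<Rightarrow> 'o \<Rightarrow> 'o"
  tmr :: "'m \<Rightarrow> 'm \<Rightarrow> 'm"
  unt :: "'o"
  asc :: "'o \<Rightarrow> 'o \<Rightarrow> 'o \<Rightarrow> 'm"  \<comment> \<open>(X \<otimes> Y) \<otimes> Z \<rightarrow> X \<otimes> (Y \<otimes> Z)\<close>
  lun :: "'o \<Rightarrow> 'm"
  run :: "'o \<Rightarrow> 'm"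
  swp :: "'o \<Rightarrow> 'o \<Rightarrow> 'm"

definition is_iso :: "('o, 'm, 'z) smc_scheme \<Rightarrow> 'o \<Rightarrow> 'o \<Rightarrow> 'm \<Rightarrow> bool" where
  "is_iso C A B f \<longleftrightarrow> f \<in> hom C A B \<and>
     (\<exists>g \<in> hom C B A. cmp C g f = idt C A \<and> cmp C f g = idt C B)"

definition inv_iso :: "('o, 'm, 'z) smc_scheme \<Rightarrow> 'o \<Rightarrow> 'o \<Rightarrow> 'm \<Rightarrow> 'm" where
  "inv_iso C A B f = (THE g. g \<in> hom C B A \<and> cmp C g f = idt C A \<and> cmp C f g = idt C B)"

definition is_category :: "('o, 'm, 'z) smc_scheme \<Rightarrow> bool" where
  "is_category C \<longleftrightarrow>
     (\<forall>A B f. f \<in> hom C A B \<longrightarrow> A \<in> obs C \<and> B \<in> obs C) \<and>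
     (\<forall>A \<in> obs C. idt C A \<in> hom C A A) \<and>
     (\<forall>A B D f g. f \<in> hom C A B \<longrightarrow> g \<in> hom C B D \<longrightarrow> cmp C g f \<in> hom C A D) \<and>
     (\<forall>A B D E f g h. f \<in> hom C A B \<longrightarrow> g \<in> hom C B D \<longrightarrow> h \<in> hom C D E \<longrightarrow>
        cmp C h (cmp C g f) = cmp C (cmp C h g) f) \<and>
     (\<forall>A B f. f \<in> hom C A B \<longrightarrow> cmp C (idt C B) f = f \<and> cmp C f (idt C A) = f)"

definition is_smc :: "('o, 'm, 'z) smc_scheme \<Rightarrow> bool" where
  "is_smc C \<longleftrightarrow> is_category C \<and>
     \<comment> \<open>tensor is a bifunctor\<close>
     unt C \<in> obs C \<and>
     (\<forall>X \<in> obs C. \<forall>Y \<in> obs C. tob C X Y \<in> obs C) \<and>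
     (\<forall>A B A' B' f g. f \<in> hom C A B \<longrightarrow> g \<in> hom C A' B' \<longrightarrow>
        tmr C f g \<in> hom C (tob C A A') (tob C B B')) \<and>
     (\<forall>X \<in> obs C. \<forall>Y \<in> obs C. tmr C (idt C X) (idt C Y) = idt C (tob C X Y)) \<and>
     (\<forall>A B D A' B' D' f g f' g'. f \<in> hom C A B \<longrightarrow> g \<in> hom C B D \<longrightarrow>
        f' \<in> hom C A' B' \<longrightarrow> g' \<in> hom C B' D' \<longrightarrow>
        tmr C (cmp C g f) (cmp C g' f') = cmp C (tmr C g g') (tmr C f f')) \<and>
     \<comment> \<open>structure isomorphisms\<close>
     (\<forall>X \<in> obs C. \<forall>Y \<in> obs C. \<forall>Z \<in> obs C.
        is_iso C (tob C (tob C X Y) Z) (tob C X (tob C Y Z)) (asc C X Y Z)) \<and>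
     (\<forall>X \<in> obs C. is_iso C (tob C (unt C) X) X (lun C X)) \<and>
     (\<forall>X \<in> obs C. is_iso C (tob C X (unt C)) X (run C X)) \<and>
     (\<forall>X \<in> obs C. \<forall>Y \<in> obs C. is_iso C (tob C X Y) (tob C Y X) (swp C X Y)) \<and>
     \<comment> \<open>naturality\<close>
     (\<forall>A A' B B' D D' f g h. f \<in> hom C A A' \<longrightarrow> g \<in> hom C B B' \<longrightarrow> h \<in> hom C D D' \<longrightarrow>
        cmp C (asc C A' B' D') (tmr C (tmr C f g) h) = cmp C (tmr C f (tmr C g h)) (asc C A B D)) \<and>
     (\<forall>A A' f. f \<in> hom C A A' \<longrightarrow>
        cmp C (lun C A') (tmr C (idt C (unt C)) f) = cmp C f (lun C A)) \<and>
     (\<forall>A A' f. f \<in> hom C A A' \<longrightarrow>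
        cmp C (run C A') (tmr C f (idt C (unt C))) = cmp C f (run C A)) \<and>
     (\<forall>A A' B B' f g. f \<in> hom C A A' \<longrightarrow> g \<in> hom C B B' \<longrightarrow>
        cmp C (swp C A' B') (tmr C f g) = cmp C (tmr C g f) (swp C A B)) \<and>
     \<comment> \<open>pentagon\<close>
     (\<forall>W \<in> obs C. \<forall>X \<in> obs C. \<forall>Y \<in> obs C. \<forall>Z \<in> obs C.
        cmp C (asc C W X (tob C Y Z)) (asc C (tob C W X) Y Z) =
        cmp C (tmr C (idt C W) (asc C X Y Z))
          (cmp C (asc C W (tob C X Y) Z) (tmr C (asc C W X Y) (idt C Z)))) \<and>
     \<comment> \<open>triangle\<close>
     (\<forall>X \<in> obs C. \<forall>Y \<in> obs C.
        cmp C (tmr C (idt C X) (lun C Y)) (asc C X (unt C) Y) = tmr C (run C X) (idt C Y)) \<and>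
     \<comment> \<open>hexagon\<close>
     (\<forall>X \<in> obs C. \<forall>Y \<in> obs C. \<forall>Z \<in> obs C.
        cmp C (asc C Y Z X) (cmp C (swp C X (tob C Y Z)) (asc C X Y Z)) =
        cmp C (tmr C (idt C Y) (swp C X Z))
          (cmp C (asc C Y X Z) (tmr C (swp C X Y) (idt C Z)))) \<and>
     \<comment> \<open>symmetry\<close>
     (\<forall>X \<in> obs C. \<forall>Y \<in> obs C. cmp C (swp C Y X) (swp C X Y) = idt C (tob C X Y))"

definition semicartesian :: "('o, 'm, 'z) smc_scheme \<Rightarrow> bool" where
  "semicartesian C \<longleftrightarrow> is_smc C \<and> (\<forall>X \<in> obs C. \<exists>!d. d \<in> hom C X (unt C))"

definition del :: "('o, 'm, 'z) smc_scheme \<Rightarrow> 'o \<Rightarrow> 'm" where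
  "del C X = (THE d. d \<in> hom C X (unt C))"

text \<open>Middle-four interchange (X \<otimes> X) \<otimes> (Y \<otimes> Y) \<rightarrow> (X \<otimes> Y) \<otimes> (X \<otimes> Y).\<close>
definition mid_swap :: "('o, 'm, 'z) smc_scheme \<Rightarrow> 'o \<Rightarrow> 'o \<Rightarrow> 'm" where
  "mid_swap C X Y =
    cmp C (inv_iso C (tob C (tob C X Y) (tob C X Y)) (tob C X (tob C Y (tob C X Y)))
                     (asc C X Y (tob C X Y)))
     (cmp C (tmr C (idt C X)
               (cmp C (asc C Y X Y)
                 (cmp C (tmr C (swp C X Y) (idt C Y))
                    (inv_iso C (tob C (tob C X Y) Y) (tob C X (tob C Y Y)) (asc C X Y Y)))))
        (asc C X X (tob C Y Y)))"

definition markov :: "('o, 'm, 'z) smc_scheme \<Rightarrow> ('o \<Rightarrow> 'm) \<Rightarrow> bool" where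
  "markov C copy \<longleftrightarrow> semicartesian C \<and>
     (\<forall>X \<in> obs C. copy X \<in> hom C X (tob C X X) \<and>
        cmp C (lun C X) (cmp C (tmr C (del C X) (idt C X)) (copy X)) = idt C X \<and>
        cmp C (run C X) (cmp C (tmr C (idt C X) (del C X)) (copy X)) = idt C X \<and>
        cmp C (asc C X X X) (cmp C (tmr C (copy X) (idt C X)) (copy X)) =
          cmp C (tmr C (idt C X) (copy X)) (copy X) \<and>
        cmp C (swp C X X) (copy X) = copy X) \<and>
     (\<forall>X \<in> obs C. \<forall>Y \<in> obs C.
        copy (tob C X Y) = cmp C (mid_swap C X Y) (tmr C (copy X) (copy Y)))"

definition dilation :: "('o, 'm, 'z) smc_scheme \<Rightarrow> 'm \<Rightarrow> 'o \<Rightarrow> 'o \<Rightarrow> 'o \<Rightarrow> 'm \<Rightarrow> bool" where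
  "dilation C p A X E \<pi> \<longleftrightarrow> E \<in> obs C \<and> \<pi> \<in> hom C A (tob C X E) \<and>
     cmp C (run C X) (cmp C (tmr C (idt C X) (del C E)) \<pi>) = p"

definition dil_equal ::
  "('o, 'm, 'z) smc_scheme \<Rightarrow> 'm \<Rightarrow> 'o \<Rightarrow> 'o \<Rightarrow> 'o \<Rightarrow> 'm \<Rightarrow> 'm \<Rightarrow> bool" where
  "dil_equal C \<pi> A X E f1 f2 \<longleftrightarrow>
     (\<forall>F \<rho>. dilation C \<pi> A (tob C X E) F \<rho> \<longrightarrow>
        cmp C (tmr C (tmr C (idt C X) f1) (idt C F)) \<rho> =
        cmp C (tmr C (tmr C (idt C X) f2) (idt C F)) \<rho>)"

definition initial_dilation ::
  "('o, 'm, 'z) smc_scheme \<Rightarrow> 'm \<Rightarrow> 'o \<Rightarrow> 'o \<Rightarrow> 'o \<Rightarrow> 'm \<Rightarrow> bool" where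
  "initial_dilation C p A X E \<pi> \<longleftrightarrow> dilation C p A X E \<pi> \<and>
     (\<forall>E' \<pi>'. dilation C p A X E' \<pi>' \<longrightarrow>
        (\<exists>f \<in> hom C E E'. cmp C (tmr C (idt C X) f) \<pi> = \<pi>') \<and>
        (\<forall>f1 \<in> hom C E E'. \<forall>f2 \<in> hom C E E'.
           cmp C (tmr C (idt C X) f1) \<pi> = \<pi>' \<longrightarrow> cmp C (tmr C (idt C X) f2) \<pi> = \<pi>' \<longrightarrow>
           dil_equal C \<pi> A X E f1 f2))"

definition non_creative :: "('o, 'm, 'z) smc_scheme \<Rightarrow> 'm \<Rightarrow> 'o \<Rightarrow> 'o \<Rightarrow> bool" where
  "non_creative C p A X \<longleftrightarrow>
     (\<forall>E \<pi>. dilation C p A X E \<pi> \<longrightarrow>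
        (\<exists>\<iota>. dilation C (idt C A) A A E \<iota> \<and> \<pi> = cmp C (tmr C p (idt C E)) \<iota>))"

definition marginal :: "('o, 'm, 'z) smc_scheme \<Rightarrow> 'o \<Rightarrow> 'o \<Rightarrow> 'm \<Rightarrow> 'm" where
  "marginal C X E \<iota> = cmp C (lun C E) (cmp C (tmr C (del C X) (idt C E)) \<iota>)"

end

theory Submission
  imports Defs
begin

locale sc =
  fixes C :: "('o, 'm, 'z) smc_scheme"
  assumes semi: "semicartesian C"
begin

abbreviation Ob where "Ob \<equiv> obs C"
abbreviation I where "I \<equiv> unt C"
abbreviation Hom where "Hom A B \<equiv> hom C A B"
abbreviation cp (infixr "\<cdot>" 55) where "g \<cdot> f \<equiv> cmp C g f"
abbreviation tm (infixr "\<odot>" 70) where "f \<odot> g \<equiv> tmr C f g"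
abbreviation tb (infixr "\<bullet>" 75) where "A \<bullet> B \<equiv> tob C A B"
abbreviation ii where "ii A \<equiv> idt C A"
abbreviation al where "al \<equiv> asc C"
abbreviation lu where "lu \<equiv> lun C"
abbreviation ru where "ru \<equiv> run C"
abbreviation sw where "sw \<equiv> swp C"
abbreviation dl where "dl \<equiv> del C"
definition "ali X Y Z = inv_iso C ((X \<bullet> Y) \<bullet> Z) (X \<bullet> (Y \<bullet> Z)) (al X Y Z)"
definition "lui X = inv_iso C (I \<bullet> X) X (lu X)"
definition "rui X = inv_iso C (X \<bullet> I) X (ru X)"

lemma smc: "is_smc C" using semi unfolding semicartesian_def by auto
lemma cat: "is_category C" using smc unfolding is_smc_def by (elim conjE)

lemma hom_obs: "f \<in> Hom A B \<Longrightarrow> A \<in> Ob" "f \<in> Hom A B \<Longrightarrow> B \<in> Ob"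
  using cat[unfolded is_category_def, THEN conjunct1] by blast+
lemma id_hom: "A \<in> Ob \<Longrightarrow> ii A \<in> Hom A A" by (rule cat[unfolded is_category_def, THEN conjunct2, THEN conjunct1, rule_format])
lemma cmp_hom: "f \<in> Hom A B \<Longrightarrow> g \<in> Hom B D \<Longrightarrow> g \<cdot> f \<in> Hom A D"
  by (rule cat[unfolded is_category_def, THEN conjunct2, THEN conjunct2, THEN conjunct1, rule_format])
lemma assoc: "f \<in> Hom A B \<Longrightarrow> g \<in> Hom B D \<Longrightarrow> h \<in> Hom D E \<Longrightarrow> (h \<cdot> g) \<cdot> f = h \<cdot> g \<cdot> f"
  by (rule cat[unfolded is_category_def, THEN conjunct2, THEN conjunct2, THEN conjunct2, THEN conjunct1, rule_format, symmetric])
lemma idl: "f \<in> Hom A B \<Longrightarrow> ii B \<cdot> f = f" using cat[unfolded is_category_def, THEN conjunct2, THEN conjunct2, THEN conjunct2, THEN conjunct2] by blast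
lemma idr: "f \<in> Hom A B \<Longrightarrow> f \<cdot> ii A = f" using cat[unfolded is_category_def, THEN conjunct2, THEN conjunct2, THEN conjunct2, THEN conjunct2] by blast
lemma unt_obs: "I \<in> Ob" by (rule smc[unfolded is_smc_def, THEN conjunct2, THEN conjunct1, rule_format])
lemma tob_obs: "A \<in> Ob \<Longrightarrow> B \<in> Ob \<Longrightarrow> A \<bullet> B \<in> Ob" by (rule smc[unfolded is_smc_def, THEN conjunct2, THEN conjunct2, THEN conjunct1, rule_format])
lemma tmr_hom: "f \<in> Hom A B \<Longrightarrow> g \<in> Hom A' B' \<Longrightarrow> f \<odot> g \<in> Hom (A \<bullet> A') (B \<bullet> B')"
  by (rule smc[unfolded is_smc_def, THEN conjunct2, THEN conjunct2, THEN conjunct2, THEN conjunct1, rule_format])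
lemma tmr_id: "A \<in> Ob \<Longrightarrow> B \<in> Ob \<Longrightarrow> ii A \<odot> ii B = ii (A \<bullet> B)"
  by (rule smc[unfolded is_smc_def, THEN conjunct2, THEN conjunct2, THEN conjunct2, THEN conjunct2, THEN conjunct1, rule_format])
lemma interchange: "f \<in> Hom A B \<Longrightarrow> g \<in> Hom B D \<Longrightarrow> f' \<in> Hom A' B' \<Longrightarrow> g' \<in> Hom B' D' \<Longrightarrow>
   (g \<cdot> f) \<odot> (g' \<cdot> f') = (g \<odot> g') \<cdot> (f \<odot> f')"
  by (rule smc[unfolded is_smc_def, THEN conjunct2, THEN conjunct2, THEN conjunct2, THEN conjunct2, THEN conjunct2, THEN conjunct1, rule_format])
lemma asc_iso: "X \<in> Ob \<Longrightarrow> Y \<in> Ob \<Longrightarrow> Z \<in> Ob \<Longrightarrow> is_iso C ((X \<bullet> Y) \<bullet> Z) (X \<bullet> (Y \<bullet> Z)) (al X Y Z)"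
  by (rule smc[unfolded is_smc_def, THEN conjunct2, THEN conjunct2, THEN conjunct2, THEN conjunct2, THEN conjunct2, THEN conjunct2, THEN conjunct1, rule_format])
lemma lun_iso: "X \<in> Ob \<Longrightarrow> is_iso C (I \<bullet> X) X (lu X)"
  by (rule smc[unfolded is_smc_def, THEN conjunct2, THEN conjunct2, THEN conjunct2, THEN conjunct2, THEN conjunct2, THEN conjunct2, THEN conjunct2, THEN conjunct1, rule_format])
lemma run_iso: "X \<in> Ob \<Longrightarrow> is_iso C (X \<bullet> I) X (ru X)"
  by (rule smc[unfolded is_smc_def, THEN conjunct2, THEN conjunct2, THEN conjunct2, THEN conjunct2, THEN conjunct2, THEN conjunct2, THEN conjunct2, THEN conjunct2, THEN conjunct1, rule_format])
lemma swp_iso: "X \<in> Ob \<Longrightarrow> Y \<in> Ob \<Longrightarrow> is_iso C (X \<bullet> Y) (Y \<bullet> X) (sw X Y)"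
  by (rule smc[unfolded is_smc_def, THEN conjunct2, THEN conjunct2, THEN conjunct2, THEN conjunct2, THEN conjunct2, THEN conjunct2, THEN conjunct2, THEN conjunct2, THEN conjunct2, THEN conjunct1, rule_format])
lemma nat_asc: "f \<in> Hom A A' \<Longrightarrow> g \<in> Hom B B' \<Longrightarrow> h \<in> Hom D D' \<Longrightarrow>
  al A' B' D' \<cdot> ((f \<odot> g) \<odot> h) = (f \<odot> (g \<odot> h)) \<cdot> al A B D"
  by (rule smc[unfolded is_smc_def, THEN conjunct2, THEN conjunct2, THEN conjunct2, THEN conjunct2, THEN conjunct2, THEN conjunct2, THEN conjunct2, THEN conjunct2, THEN conjunct2, THEN conjunct2, THEN conjunct1, rule_format])
lemma nat_lun: "f \<in> Hom A A' \<Longrightarrow> lu A' \<cdot> (ii I \<odot> f) = f \<cdot> lu A"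
  by (rule smc[unfolded is_smc_def, THEN conjunct2, THEN conjunct2, THEN conjunct2, THEN conjunct2, THEN conjunct2, THEN conjunct2, THEN conjunct2, THEN conjunct2, THEN conjunct2, THEN conjunct2, THEN conjunct2, THEN conjunct1, rule_format])
lemma nat_run: "f \<in> Hom A A' \<Longrightarrow> ru A' \<cdot> (f \<odot> ii I) = f \<cdot> ru A"
  by (rule smc[unfolded is_smc_def, THEN conjunct2, THEN conjunct2, THEN conjunct2, THEN conjunct2, THEN conjunct2, THEN conjunct2, THEN conjunct2, THEN conjunct2, THEN conjunct2, THEN conjunct2, THEN conjunct2, THEN conjunct2, THEN conjunct1, rule_format])
lemma nat_swp: "f \<in> Hom A A' \<Longrightarrow> g \<in> Hom B B' \<Longrightarrow> sw A' B' \<cdot> (f \<odot> g) = (g \<odot> f) \<cdot> sw A B"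
  by (rule smc[unfolded is_smc_def, THEN conjunct2, THEN conjunct2, THEN conjunct2, THEN conjunct2, THEN conjunct2, THEN conjunct2, THEN conjunct2, THEN conjunct2, THEN conjunct2, THEN conjunct2, THEN conjunct2, THEN conjunct2, THEN conjunct2, THEN conjunct1, rule_format])
lemma pentagon: "W \<in> Ob \<Longrightarrow> X \<in> Ob \<Longrightarrow> Y \<in> Ob \<Longrightarrow> Z \<in> Ob \<Longrightarrow>
  al W X (Y \<bullet> Z) \<cdot> al (W \<bullet> X) Y Z = (ii W \<odot> al X Y Z) \<cdot> al W (X \<bullet> Y) Z \<cdot> (al W X Y \<odot> ii Z)"
  by (rule smc[unfolded is_smc_def, THEN conjunct2, THEN conjunct2, THEN conjunct2, THEN conjunct2, THEN conjunct2, THEN conjunct2, THEN conjunct2, THEN conjunct2, THEN conjunct2, THEN conjunct2, THEN conjunct2, THEN conjunct2, THEN conjunct2, THEN conjunct2, THEN conjunct1, rule_format])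
lemma triangle: "X \<in> Ob \<Longrightarrow> Y \<in> Ob \<Longrightarrow> (ii X \<odot> lu Y) \<cdot> al X I Y = ru X \<odot> ii Y"
  by (rule smc[unfolded is_smc_def, THEN conjunct2, THEN conjunct2, THEN conjunct2, THEN conjunct2, THEN conjunct2, THEN conjunct2, THEN conjunct2, THEN conjunct2, THEN conjunct2, THEN conjunct2, THEN conjunct2, THEN conjunct2, THEN conjunct2, THEN conjunct2, THEN conjunct2, THEN conjunct1, rule_format])
lemma hexagon: "X \<in> Ob \<Longrightarrow> Y \<in> Ob \<Longrightarrow> Z \<in> Ob \<Longrightarrow>
  al Y Z X \<cdot> sw X (Y \<bullet> Z) \<cdot> al X Y Z = (ii Y \<odot> sw X Z) \<cdot> al Y X Z \<cdot> (sw X Y \<odot> ii Z)"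
  by (rule smc[unfolded is_smc_def, THEN conjunct2, THEN conjunct2, THEN conjunct2, THEN conjunct2, THEN conjunct2, THEN conjunct2, THEN conjunct2, THEN conjunct2, THEN conjunct2, THEN conjunct2, THEN conjunct2, THEN conjunct2, THEN conjunct2, THEN conjunct2, THEN conjunct2, THEN conjunct2, THEN conjunct1, rule_format])
lemma symm: "X \<in> Ob \<Longrightarrow> Y \<in> Ob \<Longrightarrow> sw Y X \<cdot> sw X Y = ii (X \<bullet> Y)"
  by (rule smc[unfolded is_smc_def, THEN conjunct2, THEN conjunct2, THEN conjunct2, THEN conjunct2, THEN conjunct2, THEN conjunct2, THEN conjunct2, THEN conjunct2, THEN conjunct2, THEN conjunct2, THEN conjunct2, THEN conjunct2, THEN conjunct2, THEN conjunct2, THEN conjunct2, THEN conjunct2, THEN conjunct2, rule_format])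

lemma inv_iso_prop: assumes "is_iso C A B f"
  shows "inv_iso C A B f \<in> Hom B A" "inv_iso C A B f \<cdot> f = ii A" "f \<cdot> inv_iso C A B f = ii B"
proof -
  obtain g where g: "g \<in> Hom B A" "g \<cdot> f = ii A" "f \<cdot> g = ii B" using assms unfolding is_iso_def by blast
  have f: "f \<in> Hom A B" using assms unfolding is_iso_def by blast
  have u: "g' = g" if "g' \<in> Hom B A" "g' \<cdot> f = ii A" "f \<cdot> g' = ii B" for g'
  proof -
    have "g' = g' \<cdot> ii B" using idr[OF that(1)] by (rule sym)
    also have "\<dots> = g' \<cdot> f \<cdot> g" using g(3) by (rule subst) (rule refl)
    also have "\<dots> = (g' \<cdot> f) \<cdot> g" using assoc[OF g(1) f that(1)] by (rule sym)
    also have "\<dots> = ii A \<cdot> g" using that(2) by (rule subst) (rule refl)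
    also have "\<dots> = g" using idl[OF g(1)] .
    finally show ?thesis .
  qed
  have "inv_iso C A B f = g" unfolding inv_iso_def
    by (rule the_equality) (rule conjI, rule g, rule conjI, rule g, rule g, rule u, blast+)
  with g show "inv_iso C A B f \<in> Hom B A" "inv_iso C A B f \<cdot> f = ii A" "f \<cdot> inv_iso C A B f = ii B" by simp_all
qed

lemma del_hom: "X \<in> Ob \<Longrightarrow> dl X \<in> Hom X I"
proof -
  assume X: "X \<in> Ob"
  have "\<exists>!d. d \<in> Hom X I" using semi X unfolding semicartesian_def by blast
  then show ?thesis unfolding del_def by (rule theI')
qed
lemma del_uniq: "d \<in> Hom X I \<Longrightarrow> d = dl X"
proof -
  assume d: "d \<in> Hom X I"
  then have X: "X \<in> Ob" by (rule hom_obs)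
  have "\<exists>!d. d \<in> Hom X I" using semi X unfolding semicartesian_def by blast
  then show ?thesis using d del_hom[OF X] by blast
qed

lemma asc_hom: "X \<in> Ob \<Longrightarrow> Y \<in> Ob \<Longrightarrow> Z \<in> Ob \<Longrightarrow> al X Y Z \<in> Hom ((X \<bullet> Y) \<bullet> Z) (X \<bullet> (Y \<bullet> Z))"
  using asc_iso[unfolded is_iso_def] by blast
lemma ali_hom: "X \<in> Ob \<Longrightarrow> Y \<in> Ob \<Longrightarrow> Z \<in> Ob \<Longrightarrow> ali X Y Z \<in> Hom (X \<bullet> (Y \<bullet> Z)) ((X \<bullet> Y) \<bullet> Z)"
  unfolding ali_def using inv_iso_prop[OF asc_iso] by blast
lemma lun_hom: "X \<in> Ob \<Longrightarrow> lu X \<in> Hom (I \<bullet> X) X" using lun_iso[unfolded is_iso_def] by blast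
lemma lui_hom: "X \<in> Ob \<Longrightarrow> lui X \<in> Hom X (I \<bullet> X)" unfolding lui_def using inv_iso_prop[OF lun_iso] by blast
lemma run_hom: "X \<in> Ob \<Longrightarrow> ru X \<in> Hom (X \<bullet> I) X" using run_iso[unfolded is_iso_def] by blast
lemma rui_hom: "X \<in> Ob \<Longrightarrow> rui X \<in> Hom X (X \<bullet> I)" unfolding rui_def using inv_iso_prop[OF run_iso] by blast
lemma swp_hom: "X \<in> Ob \<Longrightarrow> Y \<in> Ob \<Longrightarrow> sw X Y \<in> Hom (X \<bullet> Y) (Y \<bullet> X)" using swp_iso[unfolded is_iso_def] by blast

lemma ali_al: "X \<in> Ob \<Longrightarrow> Y \<in> Ob \<Longrightarrow> Z \<in> Ob \<Longrightarrow> ali X Y Z \<cdot> al X Y Z = ii ((X \<bullet> Y) \<bullet> Z)"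
  unfolding ali_def using inv_iso_prop[OF asc_iso] by blast
lemma al_ali: "X \<in> Ob \<Longrightarrow> Y \<in> Ob \<Longrightarrow> Z \<in> Ob \<Longrightarrow> al X Y Z \<cdot> ali X Y Z = ii (X \<bullet> (Y \<bullet> Z))"
  unfolding ali_def using inv_iso_prop[OF asc_iso] by blast
lemma lui_lu: "X \<in> Ob \<Longrightarrow> lui X \<cdot> lu X = ii (I \<bullet> X)" unfolding lui_def using inv_iso_prop[OF lun_iso] by blast
lemma lu_lui: "X \<in> Ob \<Longrightarrow> lu X \<cdot> lui X = ii X" unfolding lui_def using inv_iso_prop[OF lun_iso] by blast
lemma rui_ru: "X \<in> Ob \<Longrightarrow> rui X \<cdot> ru X = ii (X \<bullet> I)" unfolding rui_def using inv_iso_prop[OF run_iso] by blast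
lemma ru_rui: "X \<in> Ob \<Longrightarrow> ru X \<cdot> rui X = ii X" unfolding rui_def using inv_iso_prop[OF run_iso] by blast

lemmas tyI = id_hom cmp_hom tmr_hom asc_hom ali_hom lun_hom lui_hom run_hom rui_hom swp_hom del_hom
  tob_obs unt_obs



lemma rest2: "a \<cdot> b = x \<Longrightarrow> b \<in> Hom A B \<Longrightarrow> a \<in> Hom B D \<Longrightarrow> r \<in> Hom Z A \<Longrightarrow> a \<cdot> b \<cdot> r = x \<cdot> r"
  using assoc[of r Z A b B a D] by simp

lemma ic: "f \<in> Hom A B \<Longrightarrow> g \<in> Hom B D \<Longrightarrow> f' \<in> Hom A' B' \<Longrightarrow> g' \<in> Hom B' D' \<Longrightarrow>
   (g \<odot> g') \<cdot> (f \<odot> f') = (g \<cdot> f) \<odot> (g' \<cdot> f')"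
  by (rule interchange[symmetric])

lemma ic_r: "f \<in> Hom A B \<Longrightarrow> g \<in> Hom B D \<Longrightarrow> f' \<in> Hom A' B' \<Longrightarrow> g' \<in> Hom B' D' \<Longrightarrow> r \<in> Hom Z (A \<bullet> A') \<Longrightarrow>
   (g \<odot> g') \<cdot> (f \<odot> f') \<cdot> r = ((g \<cdot> f) \<odot> (g' \<cdot> f')) \<cdot> r"
  by (rule rest2[OF ic]) ((rule refl | assumption | rule tyI)+)

lemma cancel_r: assumes "x \<in> Hom B D" "y \<in> Hom B D" "h \<in> Hom A B" "h' \<in> Hom B A" "h \<cdot> h' = ii B" "x \<cdot> h = y \<cdot> h"
  shows "x = y"
proof -
  have "x = x \<cdot> ii B" using idr[OF assms(1)] by simp
  also have "\<dots> = x \<cdot> h \<cdot> h'" using assms(5) by simp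
  also have "\<dots> = (x \<cdot> h) \<cdot> h'" by (insert assms, (subst assoc; (rule refl | assumption | rule tyI)+))
  also have "\<dots> = (y \<cdot> h) \<cdot> h'" using assms(6) by simp
  also have "\<dots> = y \<cdot> h \<cdot> h'" by (insert assms, (subst assoc; (rule refl | assumption | rule tyI)+))
  also have "\<dots> = y" using assms idr[OF assms(2)] by simp
  finally show ?thesis .
qed

lemma cancel_l: assumes "x \<in> Hom A B" "y \<in> Hom A B" "h \<in> Hom B D" "h' \<in> Hom D B" "h' \<cdot> h = ii B" "h \<cdot> x = h \<cdot> y"
  shows "x = y"
proof -
  have "x = ii B \<cdot> x" using idl[OF assms(1)] by simp
  also have "\<dots> = (h' \<cdot> h) \<cdot> x" using assms(5) by simp
  also have "\<dots> = h' \<cdot> h \<cdot> x" by (insert assms, (subst assoc; (rule refl | assumption | rule tyI)+))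
  also have "\<dots> = h' \<cdot> h \<cdot> y" using assms(6) by simp
  also have "\<dots> = (h' \<cdot> h) \<cdot> y" by (insert assms, (subst assoc; (rule refl | assumption | rule tyI)+))
  also have "\<dots> = y" using assms idl[OF assms(2)] by simp
  finally show ?thesis .
qed

lemma lu_conj: assumes h: "h \<in> Hom M N" shows "h = lu N \<cdot> (ii I \<odot> h) \<cdot> lui M"
proof -
  have M: "M \<in> Ob" and N: "N \<in> Ob" using hom_obs h by auto
  have "h = h \<cdot> ii M" using idr[OF h] by simp
  also have "\<dots> = h \<cdot> lu M \<cdot> lui M" using lu_lui[OF M] by simp
  also have "\<dots> = (h \<cdot> lu M) \<cdot> lui M" by (insert h M, (subst assoc; (rule refl | assumption | rule tyI)+))
  also have "\<dots> = (lu N \<cdot> (ii I \<odot> h)) \<cdot> lui M" using nat_lun[OF h] by simp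
  also have "\<dots> = lu N \<cdot> (ii I \<odot> h) \<cdot> lui M" by (insert h M N, (subst assoc; (rule refl | assumption | rule tyI)+))
  finally show ?thesis .
qed

lemma ru_conj: assumes h: "h \<in> Hom M N" shows "h = ru N \<cdot> (h \<odot> ii I) \<cdot> rui M"
proof -
  have M: "M \<in> Ob" and N: "N \<in> Ob" using hom_obs h by auto
  have "h = h \<cdot> ii M" using idr[OF h] by simp
  also have "\<dots> = h \<cdot> ru M \<cdot> rui M" using ru_rui[OF M] by simp
  also have "\<dots> = (h \<cdot> ru M) \<cdot> rui M" by (insert h M, (subst assoc; (rule refl | assumption | rule tyI)+))
  also have "\<dots> = (ru N \<cdot> (h \<odot> ii I)) \<cdot> rui M" using nat_run[OF h] by simp
  also have "\<dots> = ru N \<cdot> (h \<odot> ii I) \<cdot> rui M" by (insert h M N, (subst assoc; (rule refl | assumption | rule tyI)+))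
  finally show ?thesis .
qed

lemma faithful_l: "f \<in> Hom M N \<Longrightarrow> g \<in> Hom M N \<Longrightarrow> ii I \<odot> f = ii I \<odot> g \<Longrightarrow> f = g"
  by (metis lu_conj)
lemma faithful_r: "f \<in> Hom M N \<Longrightarrow> g \<in> Hom M N \<Longrightarrow> f \<odot> ii I = g \<odot> ii I \<Longrightarrow> f = g"
  by (metis ru_conj)

lemma rest12: "a = c \<cdot> d \<Longrightarrow> d \<in> Hom A B \<Longrightarrow> c \<in> Hom B D \<Longrightarrow> r \<in> Hom Z A \<Longrightarrow> a \<cdot> r = c \<cdot> d \<cdot> r"
  using assoc[of r Z A d B c D] by simp
lemma rest22: "a \<cdot> b = c \<cdot> d \<Longrightarrow> b \<in> Hom A B \<Longrightarrow> a \<in> Hom B D \<Longrightarrow> d \<in> Hom A B' \<Longrightarrow> c \<in> Hom B' D \<Longrightarrow> r \<in> Hom Z A \<Longrightarrow> a \<cdot> b \<cdot> r = c \<cdot> d \<cdot> r"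
  using assoc[of r Z A b B a D] assoc[of r Z A d B' c D] by simp
lemma rest31: "a \<cdot> b \<cdot> e = x \<Longrightarrow> e \<in> Hom A B \<Longrightarrow> b \<in> Hom B D \<Longrightarrow> a \<in> Hom D E \<Longrightarrow> r \<in> Hom Z A \<Longrightarrow> a \<cdot> b \<cdot> e \<cdot> r = x \<cdot> r"
proof -
  assume h: "a \<cdot> b \<cdot> e = x" "e \<in> Hom A B" "b \<in> Hom B D" "a \<in> Hom D E" "r \<in> Hom Z A"
  have "x \<cdot> r = (a \<cdot> b \<cdot> e) \<cdot> r" using h(1) by simp
  also have "\<dots> = a \<cdot> (b \<cdot> e) \<cdot> r" by (insert h(2-5), (subst assoc; (rule refl | assumption | rule tyI)+))
  also have "\<dots> = a \<cdot> b \<cdot> e \<cdot> r" by (insert h(2-5), (subst assoc; (rule refl | assumption | rule tyI)+))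
  finally show ?thesis by simp
qed

lemma tid_l: "f \<in> Hom A B \<Longrightarrow> g \<in> Hom B D \<Longrightarrow> X \<in> Ob \<Longrightarrow> ii X \<odot> (g \<cdot> f) = (ii X \<odot> g) \<cdot> (ii X \<odot> f)"
  using interchange[of "ii X" X X "ii X" X f A B g D] id_hom idl[OF id_hom] by auto
lemma tid_r: "f \<in> Hom A B \<Longrightarrow> g \<in> Hom B D \<Longrightarrow> X \<in> Ob \<Longrightarrow> (g \<cdot> f) \<odot> ii X = (g \<odot> ii X) \<cdot> (f \<odot> ii X)"
  using interchange[of f A B g D "ii X" X X "ii X" X] id_hom idl[OF id_hom] by auto
lemma tid_l_r: "f \<in> Hom A B \<Longrightarrow> g \<in> Hom B D \<Longrightarrow> r \<in> Hom Z (X \<bullet> A) \<Longrightarrow> X \<in> Ob \<Longrightarrow> (ii X \<odot> (g \<cdot> f)) \<cdot> r = (ii X \<odot> g) \<cdot> (ii X \<odot> f) \<cdot> r"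
  by (rule rest12[OF tid_l]) ((rule refl | assumption | rule tyI)+)
lemma tid_r_r: "f \<in> Hom A B \<Longrightarrow> g \<in> Hom B D \<Longrightarrow> r \<in> Hom Z (A \<bullet> X) \<Longrightarrow> X \<in> Ob \<Longrightarrow> ((g \<cdot> f) \<odot> ii X) \<cdot> r = (g \<odot> ii X) \<cdot> (f \<odot> ii X) \<cdot> r"
  by (rule rest12[OF tid_r]) ((rule refl | assumption | rule tyI)+)

lemma K2: assumes A: "A \<in> Ob" and B: "B \<in> Ob" shows "lu (A \<bullet> B) \<cdot> al I A B = lu A \<odot> ii B"
proof -
  have I: "I \<in> Ob" by (rule unt_obs)
  have IA: "I \<bullet> A \<in> Ob" using I A by (rule tob_obs)
  have e1: "(ii I \<odot> (lu (A \<bullet> B) \<cdot> al I A B)) \<cdot> al I (I \<bullet> A) B \<cdot> (al I I A \<odot> ii B) = al I A B \<cdot> ((ru I \<odot> ii A) \<odot> ii B)"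
  proof -
    have "(ii I \<odot> (lu (A \<bullet> B) \<cdot> al I A B)) \<cdot> al I (I \<bullet> A) B \<cdot> (al I I A \<odot> ii B) = 
       (ii I \<odot> lu (A \<bullet> B)) \<cdot> (ii I \<odot> al I A B) \<cdot> al I (I \<bullet> A) B \<cdot> (al I I A \<odot> ii B)" by (insert A B I, (subst tid_l_r; (rule refl | assumption | rule tyI)+))
    also have "\<dots> = (ii I \<odot> lu (A \<bullet> B)) \<cdot> al I I (A \<bullet> B) \<cdot> al (I \<bullet> I) A B" by (insert A B I, (subst pentagon[symmetric]; (rule refl | assumption | rule tyI)+))
    also have "\<dots> = (ru I \<odot> ii (A \<bullet> B)) \<cdot> al (I \<bullet> I) A B" by (insert A B I, (subst rest2[OF triangle]; (rule refl | assumption | rule tyI)+))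
    also have "\<dots> = (ru I \<odot> (ii A \<odot> ii B)) \<cdot> al (I \<bullet> I) A B" by (insert A B I, (subst tmr_id[symmetric]; (rule refl | assumption | rule tyI)+))
    also have "\<dots> = al I A B \<cdot> ((ru I \<odot> ii A) \<odot> ii B)" by (insert A B I, (subst nat_asc[symmetric]; (rule refl | assumption | rule tyI)+))
    finally show ?thesis .
  qed
  have e2: "(ii I \<odot> (lu A \<odot> ii B)) \<cdot> al I (I \<bullet> A) B \<cdot> (al I I A \<odot> ii B) = al I A B \<cdot> ((ru I \<odot> ii A) \<odot> ii B)"
  proof -
    have "(ii I \<odot> (lu A \<odot> ii B)) \<cdot> al I (I \<bullet> A) B \<cdot> (al I I A \<odot> ii B) = al I A B \<cdot> ((ii I \<odot> lu A) \<odot> ii B) \<cdot> (al I I A \<odot> ii B)"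
      by (insert A B I, (subst rest22[OF nat_asc[symmetric]]; (rule refl | assumption | rule tyI)+))
    also have "\<dots> = al I A B \<cdot> (((ii I \<odot> lu A) \<cdot> al I I A) \<odot> (ii B \<cdot> ii B))" by (insert A B I, (subst ic; (rule refl | assumption | rule tyI)+))
    also have "\<dots> = al I A B \<cdot> ((ru I \<odot> ii A) \<odot> ii B)" using triangle[OF I A] idl[OF id_hom[OF B]] by simp
    finally show ?thesis .
  qed
  have inv1: "(al I I A \<odot> ii B) \<cdot> (ali I I A \<odot> ii B) = ii (((I \<bullet> (I \<bullet> A)) \<bullet> B))"
  proof -
    have "(al I I A \<odot> ii B) \<cdot> (ali I I A \<odot> ii B) = (al I I A \<cdot> ali I I A) \<odot> (ii B \<cdot> ii B)" by (insert A B I, (subst ic; (rule refl | assumption | rule tyI)+))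
    also have "\<dots> = ii (((I \<bullet> (I \<bullet> A)) \<bullet> B))" using al_ali[OF I I A] idl[OF id_hom[OF B]] tmr_id I A B tob_obs by simp
    finally show ?thesis .
  qed
  have "((ii I \<odot> (lu (A \<bullet> B) \<cdot> al I A B)) \<cdot> al I (I \<bullet> A) B) \<cdot> (al I I A \<odot> ii B) = ((ii I \<odot> (lu A \<odot> ii B)) \<cdot> al I (I \<bullet> A) B) \<cdot> (al I I A \<odot> ii B)"
  proof -
    have "((ii I \<odot> (lu (A \<bullet> B) \<cdot> al I A B)) \<cdot> al I (I \<bullet> A) B) \<cdot> (al I I A \<odot> ii B) = (ii I \<odot> (lu (A \<bullet> B) \<cdot> al I A B)) \<cdot> al I (I \<bullet> A) B \<cdot> (al I I A \<odot> ii B)"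
      by (insert A B I, (subst assoc; (rule refl | assumption | rule tyI)+))
    also have "\<dots> = (ii I \<odot> (lu A \<odot> ii B)) \<cdot> al I (I \<bullet> A) B \<cdot> (al I I A \<odot> ii B)" using e1 e2 by simp
    also have "\<dots> = ((ii I \<odot> (lu A \<odot> ii B)) \<cdot> al I (I \<bullet> A) B) \<cdot> (al I I A \<odot> ii B)" by (insert A B I, (subst assoc; (rule refl | assumption | rule tyI)+))
    finally show ?thesis .
  qed
  then have "(ii I \<odot> (lu (A \<bullet> B) \<cdot> al I A B)) \<cdot> al I (I \<bullet> A) B = (ii I \<odot> (lu A \<odot> ii B)) \<cdot> al I (I \<bullet> A) B"
    by (rule cancel_r[OF _ _ _ _ inv1, rotated 4]) (insert A B I, ((rule refl | assumption | rule tyI)+))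
  then have "ii I \<odot> (lu (A \<bullet> B) \<cdot> al I A B) = ii I \<odot> (lu A \<odot> ii B)"
    by (rule cancel_r[OF _ _ _ _ al_ali[OF I IA B], rotated 4]) (insert A B I, ((rule refl | assumption | rule tyI)+))
  then show ?thesis by (rule faithful_l[rotated 2]) (insert A B I, ((rule refl | assumption | rule tyI)+))
qed

lemma post_inv: assumes "x = y \<cdot> v" "v \<cdot> v' = ii S" "v \<in> Hom R S" "v' \<in> Hom S R" "y \<in> Hom S Q"
  shows "x \<cdot> v' = y"
proof -
  have "x \<cdot> v' = (y \<cdot> v) \<cdot> v'" using assms(1) by simp
  also have "\<dots> = y \<cdot> v \<cdot> v'" by (insert assms(3-5), (subst assoc; (rule refl | assumption | rule tyI)+))
  also have "\<dots> = y" using assms(2) idr[OF assms(5)] hom_obs[OF assms(3)] by simp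
  finally show ?thesis .
qed

lemma conj: assumes "u \<in> Hom P Q" "u' \<in> Hom Q P" "u' \<cdot> u = ii P" "v \<in> Hom R S" "v' \<in> Hom S R" "v \<cdot> v' = ii S"
  "x \<in> Hom R P" "y \<in> Hom S Q" "u \<cdot> x = y \<cdot> v"
  shows "x \<cdot> v' = u' \<cdot> y"
proof -
  have "x \<cdot> v' = ii P \<cdot> x \<cdot> v'" using idl[OF cmp_hom[OF assms(5) assms(7)]] by simp
  also have "\<dots> = (u' \<cdot> u) \<cdot> x \<cdot> v'" using assms(3) by simp
  also have "\<dots> = u' \<cdot> u \<cdot> x \<cdot> v'" by (insert assms(1-8), (subst assoc; (rule refl | assumption | rule tyI)+))
  also have "\<dots> = u' \<cdot> (u \<cdot> x) \<cdot> v'" by (insert assms(1-8), (subst assoc; (rule refl | assumption | rule tyI)+))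
  also have "\<dots> = u' \<cdot> (y \<cdot> v) \<cdot> v'" using assms(9) by simp
  also have "\<dots> = u' \<cdot> y \<cdot> v \<cdot> v'" by (insert assms(1-8), (subst assoc; (rule refl | assumption | rule tyI)+))
  also have "\<dots> = u' \<cdot> y \<cdot> ii S" using assms(6) by simp
  also have "\<dots> = u' \<cdot> y" using idr[OF assms(8)] by simp
  finally show ?thesis .
qed

lemma nat_ali: assumes "f \<in> Hom A A'" "g \<in> Hom B B'" "h \<in> Hom D D'"
  shows "ali A' B' D' \<cdot> (f \<odot> (g \<odot> h)) = ((f \<odot> g) \<odot> h) \<cdot> ali A B D"
proof -
  have o: "A \<in> Ob" "A' \<in> Ob" "B \<in> Ob" "B' \<in> Ob" "D \<in> Ob" "D' \<in> Ob" using hom_obs assms by auto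
  show ?thesis
    by (rule conj[OF asc_hom ali_hom ali_al asc_hom ali_hom al_ali _ _ nat_asc[OF assms], symmetric]) (insert o assms, ((rule refl | assumption | rule tyI)+))
qed

lemma tri_inv: assumes "X \<in> Ob" "Y \<in> Ob" shows "(ru X \<odot> ii Y) \<cdot> ali X I Y = ii X \<odot> lu Y"
  by (rule post_inv[OF triangle[symmetric] al_ali]) (insert assms, ((rule refl | assumption | rule tyI)+))

lemma K2_inv: assumes "A \<in> Ob" "B \<in> Ob" shows "(lu A \<odot> ii B) \<cdot> ali I A B = lu (A \<bullet> B)"
  by (rule post_inv[OF K2[symmetric] al_ali]) (insert assms, ((rule refl | assumption | rule tyI)+))

lemma K3: assumes A: "A \<in> Ob" and B: "B \<in> Ob" shows "ru (A \<bullet> B) = (ii A \<odot> ru B) \<cdot> al A B I"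
proof -
  have I: "I \<in> Ob" by (rule unt_obs)
  have e1: "(ii A \<odot> (ii B \<odot> lu I)) \<cdot> al A B (I \<bullet> I) \<cdot> al (A \<bullet> B) I I = al A B I \<cdot> (ru (A \<bullet> B) \<odot> ii I)"
  proof -
    have "(ii A \<odot> (ii B \<odot> lu I)) \<cdot> al A B (I \<bullet> I) \<cdot> al (A \<bullet> B) I I = al A B I \<cdot> ((ii A \<odot> ii B) \<odot> lu I) \<cdot> al (A \<bullet> B) I I"
      by (insert A B I, (subst rest22[OF nat_asc[symmetric]]; (rule refl | assumption | rule tyI)+))
    also have "\<dots> = al A B I \<cdot> (ii (A \<bullet> B) \<odot> lu I) \<cdot> al (A \<bullet> B) I I" using tmr_id[OF A B] by simp
    also have "\<dots> = al A B I \<cdot> (ru (A \<bullet> B) \<odot> ii I)" by (insert A B I, (subst triangle; (rule refl | assumption | rule tyI)+))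
    finally show ?thesis .
  qed
  have e2: "(ii A \<odot> (ii B \<odot> lu I)) \<cdot> al A B (I \<bullet> I) \<cdot> al (A \<bullet> B) I I = al A B I \<cdot> (((ii A \<odot> ru B) \<cdot> al A B I) \<odot> ii I)"
  proof -
    have "(ii A \<odot> (ii B \<odot> lu I)) \<cdot> al A B (I \<bullet> I) \<cdot> al (A \<bullet> B) I I = (ii A \<odot> (ii B \<odot> lu I)) \<cdot> (ii A \<odot> al B I I) \<cdot> al A (B \<bullet> I) I \<cdot> (al A B I \<odot> ii I)"
      by (insert A B I, (subst pentagon; (rule refl | assumption | rule tyI)+))
    also have "\<dots> = ((ii A \<cdot> ii A) \<odot> ((ii B \<odot> lu I) \<cdot> al B I I)) \<cdot> al A (B \<bullet> I) I \<cdot> (al A B I \<odot> ii I)"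
      by (insert A B I, (subst ic_r; (rule refl | assumption | rule tyI)+))
    also have "\<dots> = (ii A \<odot> (ru B \<odot> ii I)) \<cdot> al A (B \<bullet> I) I \<cdot> (al A B I \<odot> ii I)"
      using triangle[OF B I] idl[OF id_hom[OF A]] by simp
    also have "\<dots> = al A B I \<cdot> ((ii A \<odot> ru B) \<odot> ii I) \<cdot> (al A B I \<odot> ii I)"
      by (insert A B I, (subst rest22[OF nat_asc[symmetric]]; (rule refl | assumption | rule tyI)+))
    also have "\<dots> = al A B I \<cdot> (((ii A \<odot> ru B) \<cdot> al A B I) \<odot> (ii I \<cdot> ii I))"
      by (insert A B I, (subst ic; (rule refl | assumption | rule tyI)+))
    also have "\<dots> = al A B I \<cdot> (((ii A \<odot> ru B) \<cdot> al A B I) \<odot> ii I)"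
      using idl[OF id_hom[OF I]] by simp
    finally show ?thesis .
  qed
  have eq: "al A B I \<cdot> (ru (A \<bullet> B) \<odot> ii I) = al A B I \<cdot> (((ii A \<odot> ru B) \<cdot> al A B I) \<odot> ii I)"
    using e1 e2 by simp
  have "ru (A \<bullet> B) \<odot> ii I = ((ii A \<odot> ru B) \<cdot> al A B I) \<odot> ii I"
    by (rule cancel_l[OF _ _ asc_hom[OF A B I] ali_hom[OF A B I] ali_al[OF A B I] eq]) (insert A B I, ((rule refl | assumption | rule tyI)+))
  then show ?thesis by (rule faithful_r[rotated 2]) (insert A B I, ((rule refl | assumption | rule tyI)+))
qed

lemma K3_inv: assumes "A \<in> Ob" "B \<in> Ob" shows "ru (A \<bullet> B) \<cdot> ali A B I = ii A \<odot> ru B"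
  by (rule post_inv[OF K3 al_ali]) (insert assms, ((rule refl | assumption | rule tyI)+))

lemma K1: assumes A: "A \<in> Ob" shows "lu A \<cdot> sw A I = ru A"
proof -
  have I: "I \<in> Ob" by (rule unt_obs)
  have e1: "lu (I \<bullet> A) \<cdot> al I I A \<cdot> sw A (I \<bullet> I) \<cdot> al A I I = sw A I \<cdot> (ru A \<odot> ii I)"
  proof -
    have "lu (I \<bullet> A) \<cdot> al I I A \<cdot> sw A (I \<bullet> I) \<cdot> al A I I = (lu I \<odot> ii A) \<cdot> sw A (I \<bullet> I) \<cdot> al A I I"
      by (insert A I, (subst rest2[OF K2]; (rule refl | assumption | rule tyI)+))
    also have "\<dots> = sw A I \<cdot> (ii A \<odot> lu I) \<cdot> al A I I" by (insert A I, (subst rest22[OF nat_swp[symmetric]]; (rule refl | assumption | rule tyI)+))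
    also have "\<dots> = sw A I \<cdot> (ru A \<odot> ii I)" by (insert A I, (subst triangle; (rule refl | assumption | rule tyI)+))
    finally show ?thesis .
  qed
  have e2: "lu (I \<bullet> A) \<cdot> (ii I \<odot> sw A I) \<cdot> al I A I \<cdot> (sw A I \<odot> ii I) = sw A I \<cdot> ((lu A \<cdot> sw A I) \<odot> ii I)"
  proof -
    have "lu (I \<bullet> A) \<cdot> (ii I \<odot> sw A I) \<cdot> al I A I \<cdot> (sw A I \<odot> ii I) = sw A I \<cdot> lu (A \<bullet> I) \<cdot> al I A I \<cdot> (sw A I \<odot> ii I)"
      by (insert A I, (subst rest22[OF nat_lun]; (rule refl | assumption | rule tyI)+))
    also have "\<dots> = sw A I \<cdot> (lu A \<odot> ii I) \<cdot> (sw A I \<odot> ii I)" by (insert A I, (subst rest2[OF K2]; (rule refl | assumption | rule tyI)+))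
    also have "\<dots> = sw A I \<cdot> ((lu A \<cdot> sw A I) \<odot> (ii I \<cdot> ii I))" by (insert A I, (subst ic; (rule refl | assumption | rule tyI)+))
    also have "\<dots> = sw A I \<cdot> ((lu A \<cdot> sw A I) \<odot> ii I)" using idl[OF id_hom[OF I]] by simp
    finally show ?thesis .
  qed
  have eq: "sw A I \<cdot> (ru A \<odot> ii I) = sw A I \<cdot> ((lu A \<cdot> sw A I) \<odot> ii I)"
    using e1 e2 hexagon[OF A I I] by simp
  have "ru A \<odot> ii I = (lu A \<cdot> sw A I) \<odot> ii I"
    by (rule cancel_l[OF _ _ swp_hom[OF A I] swp_hom[OF I A] symm[OF A I] eq]) (insert A I, ((rule refl | assumption | rule tyI)+))
  then show ?thesis by (rule faithful_r[rotated 2, symmetric]) (insert A I, ((rule refl | assumption | rule tyI)+))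
qed

lemma K1': assumes A: "A \<in> Ob" shows "ru A \<cdot> sw I A = lu A"
proof -
  have I: "I \<in> Ob" by (rule unt_obs)
  have "lu A = lu A \<cdot> ii (I \<bullet> A)" using idr[OF lun_hom[OF A]] by simp
  also have "\<dots> = lu A \<cdot> sw A I \<cdot> sw I A" using symm[OF I A] by simp
  also have "\<dots> = (lu A \<cdot> sw A I) \<cdot> sw I A" by (insert A I, (subst assoc; (rule refl | assumption | rule tyI)+))
  also have "\<dots> = ru A \<cdot> sw I A" using K1[OF A] by simp
  finally show ?thesis by simp
qed

lemma slide: assumes "a \<in> Hom A A'" "b \<in> Hom B B'"
  shows "(a \<odot> ii B') \<cdot> (ii A \<odot> b) = (ii A' \<odot> b) \<cdot> (a \<odot> ii B)"
proof -
  have o: "A \<in> Ob" "A' \<in> Ob" "B \<in> Ob" "B' \<in> Ob" using hom_obs assms by auto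
  have "(a \<odot> ii B') \<cdot> (ii A \<odot> b) = (a \<cdot> ii A) \<odot> (ii B' \<cdot> b)" by (insert assms o, (subst ic; (rule refl | assumption | rule tyI)+))
  also have "\<dots> = (ii A' \<cdot> a) \<odot> (b \<cdot> ii B)" using assms idl idr by simp
  also have "\<dots> = (ii A' \<odot> b) \<cdot> (a \<odot> ii B)" by (insert assms o, (subst ic[symmetric]; (rule refl | assumption | rule tyI)+))
  finally show ?thesis .
qed

lemma slide_r: assumes "a \<in> Hom A A'" "b \<in> Hom B B'" "r \<in> Hom Z (A \<bullet> B)"
  shows "(a \<odot> ii B') \<cdot> (ii A \<odot> b) \<cdot> r = (ii A' \<odot> b) \<cdot> (a \<odot> ii B) \<cdot> r"
proof -
  have o: "A \<in> Ob" "A' \<in> Ob" "B \<in> Ob" "B' \<in> Ob" using hom_obs assms by auto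
  show ?thesis by (rule rest22[OF slide]) (insert assms o, ((rule refl | assumption | rule tyI)+))
qed

lemma del_tob: "A \<in> Ob \<Longrightarrow> B \<in> Ob \<Longrightarrow> dl (A \<bullet> B) = lu I \<cdot> (dl A \<odot> dl B)"
  by (rule del_uniq[symmetric]) ((rule refl | assumption | rule tyI)+)

lemma del_cmp: "g \<in> Hom A B \<Longrightarrow> B \<in> Ob \<Longrightarrow> dl B \<cdot> g = dl A"
  by (rule del_uniq) ((rule refl | assumption | rule tyI)+)

lemma SWL: assumes "r \<in> Hom Z (A \<bullet> B)" "A \<in> Ob" "B \<in> Ob"
  shows "lu A \<cdot> (dl B \<odot> ii A) \<cdot> sw A B \<cdot> r = ru A \<cdot> (ii A \<odot> dl B) \<cdot> r"
proof -
  have I: "I \<in> Ob" by (rule unt_obs)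
  have "lu A \<cdot> (dl B \<odot> ii A) \<cdot> sw A B \<cdot> r = lu A \<cdot> sw A I \<cdot> (ii A \<odot> dl B) \<cdot> r"
    by (insert assms I, (subst rest22[OF nat_swp[symmetric]]; (rule refl | assumption | rule tyI)+))
  also have "\<dots> = ru A \<cdot> (ii A \<odot> dl B) \<cdot> r" by (insert assms I, (subst rest2[OF K1]; (rule refl | assumption | rule tyI)+))
  finally show ?thesis .
qed

lemma SWR: assumes "r \<in> Hom Z (A \<bullet> B)" "A \<in> Ob" "B \<in> Ob"
  shows "ru B \<cdot> (ii B \<odot> dl A) \<cdot> sw A B \<cdot> r = lu B \<cdot> (dl A \<odot> ii B) \<cdot> r"
proof -
  have I: "I \<in> Ob" by (rule unt_obs)
  have "ru B \<cdot> (ii B \<odot> dl A) \<cdot> sw A B \<cdot> r = ru B \<cdot> sw I B \<cdot> (dl A \<odot> ii B) \<cdot> r"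
    by (insert assms I, (subst rest22[OF nat_swp[symmetric]]; (rule refl | assumption | rule tyI)+))
  also have "\<dots> = lu B \<cdot> (dl A \<odot> ii B) \<cdot> r" by (insert assms I, (subst rest2[OF K1']; (rule refl | assumption | rule tyI)+))
  finally show ?thesis .
qed

lemma SWR_c: assumes "A \<in> Ob" "B \<in> Ob"
  shows "ru B \<cdot> (ii B \<odot> dl A) \<cdot> sw A B = lu B \<cdot> (dl A \<odot> ii B)"
proof -
  have I: "I \<in> Ob" by (rule unt_obs)
  have "ru B \<cdot> (ii B \<odot> dl A) \<cdot> sw A B = ru B \<cdot> sw I B \<cdot> (dl A \<odot> ii B)"
    by (insert assms I, (subst nat_swp[symmetric]; (rule refl | assumption | rule tyI)+))
  also have "\<dots> = lu B \<cdot> (dl A \<odot> ii B)" by (insert assms I, (subst rest2[OF K1']; (rule refl | assumption | rule tyI)+))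
  finally show ?thesis .
qed

lemma LM: assumes "g \<in> Hom E Y" "r \<in> Hom Z (X \<bullet> E)" "X \<in> Ob"
  shows "lu Y \<cdot> (dl X \<odot> ii Y) \<cdot> (ii X \<odot> g) \<cdot> r = g \<cdot> lu E \<cdot> (dl X \<odot> ii E) \<cdot> r"
proof -
  have I: "I \<in> Ob" by (rule unt_obs)
  have o: "E \<in> Ob" "Y \<in> Ob" using hom_obs assms by auto
  have "lu Y \<cdot> (dl X \<odot> ii Y) \<cdot> (ii X \<odot> g) \<cdot> r = lu Y \<cdot> (ii I \<odot> g) \<cdot> (dl X \<odot> ii E) \<cdot> r"
    by (insert assms I o, (subst slide_r; (rule refl | assumption | rule tyI)+))
  also have "\<dots> = g \<cdot> lu E \<cdot> (dl X \<odot> ii E) \<cdot> r" by (insert assms I o, (subst rest22[OF nat_lun]; (rule refl | assumption | rule tyI)+))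
  finally show ?thesis .
qed

lemma RM: assumes "g \<in> Hom E Y" "r \<in> Hom Z (X \<bullet> E)" "X \<in> Ob"
  shows "ru X \<cdot> (ii X \<odot> dl Y) \<cdot> (ii X \<odot> g) \<cdot> r = ru X \<cdot> (ii X \<odot> dl E) \<cdot> r"
proof -
  have I: "I \<in> Ob" by (rule unt_obs)
  have Y: "Y \<in> Ob" using hom_obs assms by auto
  have "ru X \<cdot> (ii X \<odot> dl Y) \<cdot> (ii X \<odot> g) \<cdot> r = ru X \<cdot> ((ii X \<cdot> ii X) \<odot> (dl Y \<cdot> g)) \<cdot> r"
    by (insert assms I Y, (subst ic_r; (rule refl | assumption | rule tyI)+))
  also have "\<dots> = ru X \<cdot> (ii X \<odot> dl E) \<cdot> r" using idl[OF id_hom[OF assms(3)]] del_cmp[OF assms(1) Y] by simp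
  finally show ?thesis .
qed

lemma DR3: assumes "r \<in> Hom Z ((A \<bullet> B) \<bullet> D)" "A \<in> Ob" "B \<in> Ob" "D \<in> Ob"
  shows "ru A \<cdot> (ii A \<odot> dl (B \<bullet> D)) \<cdot> al A B D \<cdot> r = ru A \<cdot> (ii A \<odot> dl D) \<cdot> ((ru A \<cdot> (ii A \<odot> dl B)) \<odot> ii D) \<cdot> r"
proof -
  have I: "I \<in> Ob" by (rule unt_obs)
  have "ru A \<cdot> (ii A \<odot> dl (B \<bullet> D)) \<cdot> al A B D \<cdot> r = ru A \<cdot> (ii A \<odot> (lu I \<cdot> (dl B \<odot> dl D))) \<cdot> al A B D \<cdot> r"
    using del_tob assms by simp
  also have "\<dots> = ru A \<cdot> (ii A \<odot> lu I) \<cdot> (ii A \<odot> (dl B \<odot> dl D)) \<cdot> al A B D \<cdot> r" by (insert assms I, (subst tid_l_r; (rule refl | assumption | rule tyI)+))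
  also have "\<dots> = ru A \<cdot> (ii A \<odot> lu I) \<cdot> al A I I \<cdot> ((ii A \<odot> dl B) \<odot> dl D) \<cdot> r" by (insert assms I, (subst rest22[OF nat_asc[symmetric]]; (rule refl | assumption | rule tyI)+))
  also have "\<dots> = ru A \<cdot> (ru A \<odot> ii I) \<cdot> ((ii A \<odot> dl B) \<odot> dl D) \<cdot> r" by (insert assms I, (subst rest2[OF triangle]; (rule refl | assumption | rule tyI)+))
  also have "\<dots> = ru A \<cdot> ((ru A \<cdot> (ii A \<odot> dl B)) \<odot> (ii I \<cdot> dl D)) \<cdot> r" by (insert assms I, (subst ic_r; (rule refl | assumption | rule tyI)+))
  also have "\<dots> = ru A \<cdot> ((ii A \<cdot> (ru A \<cdot> (ii A \<odot> dl B))) \<odot> (dl D \<cdot> ii D)) \<cdot> r"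
    using assms idl[OF del_hom[OF assms(4)]] idr[OF del_hom[OF assms(4)]] idl[OF cmp_hom[OF tmr_hom[OF id_hom[OF assms(2)] del_hom[OF assms(3)]] run_hom[OF assms(2)]]] by simp
  also have "\<dots> = ru A \<cdot> (ii A \<odot> dl D) \<cdot> ((ru A \<cdot> (ii A \<odot> dl B)) \<odot> ii D) \<cdot> r" by (insert assms I, (subst ic_r[symmetric]; (rule refl | assumption | rule tyI)+))
  finally show ?thesis .
qed

lemma EL2: assumes "r \<in> Hom Z ((A \<bullet> B) \<bullet> D)" "A \<in> Ob" "B \<in> Ob" "D \<in> Ob"
  shows "lu (B \<bullet> D) \<cdot> (dl A \<odot> ii (B \<bullet> D)) \<cdot> al A B D \<cdot> r = ((lu B \<cdot> (dl A \<odot> ii B)) \<odot> ii D) \<cdot> r"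
proof -
  have I: "I \<in> Ob" by (rule unt_obs)
  have "lu (B \<bullet> D) \<cdot> (dl A \<odot> ii (B \<bullet> D)) \<cdot> al A B D \<cdot> r = lu (B \<bullet> D) \<cdot> (dl A \<odot> (ii B \<odot> ii D)) \<cdot> al A B D \<cdot> r"
    using tmr_id assms by simp
  also have "\<dots> = lu (B \<bullet> D) \<cdot> al I B D \<cdot> ((dl A \<odot> ii B) \<odot> ii D) \<cdot> r" by (insert assms I, (subst rest22[OF nat_asc[symmetric]]; (rule refl | assumption | rule tyI)+))
  also have "\<dots> = (lu B \<odot> ii D) \<cdot> ((dl A \<odot> ii B) \<odot> ii D) \<cdot> r" by (insert assms I, (subst rest2[OF K2]; (rule refl | assumption | rule tyI)+))
  also have "\<dots> = ((lu B \<cdot> (dl A \<odot> ii B)) \<odot> (ii D \<cdot> ii D)) \<cdot> r" by (insert assms I, (subst ic_r; (rule refl | assumption | rule tyI)+))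
  also have "\<dots> = ((lu B \<cdot> (dl A \<odot> ii B)) \<odot> ii D) \<cdot> r" using idl[OF id_hom[OF assms(4)]] by simp
  finally show ?thesis .
qed

lemma DL3: assumes "r \<in> Hom Z ((A \<bullet> B) \<bullet> D)" "A \<in> Ob" "B \<in> Ob" "D \<in> Ob"
  shows "(ii A \<odot> (lu D \<cdot> (dl B \<odot> ii D))) \<cdot> al A B D \<cdot> r = ((ru A \<cdot> (ii A \<odot> dl B)) \<odot> ii D) \<cdot> r"
proof -
  have I: "I \<in> Ob" by (rule unt_obs)
  have "(ii A \<odot> (lu D \<cdot> (dl B \<odot> ii D))) \<cdot> al A B D \<cdot> r = (ii A \<odot> lu D) \<cdot> (ii A \<odot> (dl B \<odot> ii D)) \<cdot> al A B D \<cdot> r"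
    by (insert assms I, (subst tid_l_r; (rule refl | assumption | rule tyI)+))
  also have "\<dots> = (ii A \<odot> lu D) \<cdot> al A I D \<cdot> ((ii A \<odot> dl B) \<odot> ii D) \<cdot> r" by (insert assms I, (subst rest22[OF nat_asc[symmetric]]; (rule refl | assumption | rule tyI)+))
  also have "\<dots> = (ru A \<odot> ii D) \<cdot> ((ii A \<odot> dl B) \<odot> ii D) \<cdot> r" by (insert assms I, (subst rest2[OF triangle]; (rule refl | assumption | rule tyI)+))
  also have "\<dots> = ((ru A \<cdot> (ii A \<odot> dl B)) \<odot> (ii D \<cdot> ii D)) \<cdot> r" by (insert assms I, (subst ic_r; (rule refl | assumption | rule tyI)+))
  also have "\<dots> = ((ru A \<cdot> (ii A \<odot> dl B)) \<odot> ii D) \<cdot> r" using idl[OF id_hom[OF assms(4)]] by simp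
  finally show ?thesis .
qed

lemma SWL_c: assumes "A \<in> Ob" "B \<in> Ob"
  shows "lu A \<cdot> (dl B \<odot> ii A) \<cdot> sw A B = ru A \<cdot> (ii A \<odot> dl B)"
proof -
  have I: "I \<in> Ob" by (rule unt_obs)
  have "lu A \<cdot> (dl B \<odot> ii A) \<cdot> sw A B = lu A \<cdot> sw A I \<cdot> (ii A \<odot> dl B)"
    by (insert assms I, (subst nat_swp[symmetric]; (rule refl | assumption | rule tyI)+))
  also have "\<dots> = ru A \<cdot> (ii A \<odot> dl B)" by (insert assms I, (subst rest2[OF K1]; (rule refl | assumption | rule tyI)+))
  finally show ?thesis .
qed

lemma DL3': assumes "A \<in> Ob" "B \<in> Ob" "D \<in> Ob"
  shows "((lu B \<cdot> (dl A \<odot> ii B)) \<odot> ii D) \<cdot> ali A B D = lu (B \<bullet> D) \<cdot> (dl A \<odot> ii (B \<bullet> D))"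
proof -
  have "((lu B \<cdot> (dl A \<odot> ii B)) \<odot> ii D) \<cdot> ali A B D = lu (B \<bullet> D) \<cdot> (dl A \<odot> ii (B \<bullet> D)) \<cdot> al A B D \<cdot> ali A B D"
    using EL2[OF ali_hom[OF assms] assms] by simp
  also have "\<dots> = lu (B \<bullet> D) \<cdot> (dl A \<odot> ii (B \<bullet> D)) \<cdot> ii (A \<bullet> (B \<bullet> D))" using al_ali[OF assms] by simp
  also have "\<dots> = lu (B \<bullet> D) \<cdot> (dl A \<odot> ii (B \<bullet> D))" by (insert assms, (subst idr; (rule refl | assumption | rule tyI)+))
  finally show ?thesis .
qed

lemma DR': assumes "A \<in> Ob" "B \<in> Ob" "D \<in> Ob"
  shows "((ru A \<cdot> (ii A \<odot> dl B)) \<odot> ii D) \<cdot> ali A B D = ii A \<odot> (lu D \<cdot> (dl B \<odot> ii D))"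
proof -
  have "((ru A \<cdot> (ii A \<odot> dl B)) \<odot> ii D) \<cdot> ali A B D = (ii A \<odot> (lu D \<cdot> (dl B \<odot> ii D))) \<cdot> al A B D \<cdot> ali A B D"
    using DL3[OF ali_hom[OF assms] assms] by simp
  also have "\<dots> = (ii A \<odot> (lu D \<cdot> (dl B \<odot> ii D))) \<cdot> ii (A \<bullet> (B \<bullet> D))" using al_ali[OF assms] by simp
  also have "\<dots> = ii A \<odot> (lu D \<cdot> (dl B \<odot> ii D))" by (insert assms, (subst idr; (rule refl | assumption | rule tyI)+))
  finally show ?thesis .
qed

lemma EL: assumes "r \<in> Hom Z (A \<bullet> (B \<bullet> D))" "A \<in> Ob" "B \<in> Ob" "D \<in> Ob"
  shows "lu D \<cdot> (dl (A \<bullet> B) \<odot> ii D) \<cdot> ali A B D \<cdot> r = lu D \<cdot> (dl B \<odot> ii D) \<cdot> lu (B \<bullet> D) \<cdot> (dl A \<odot> ii (B \<bullet> D)) \<cdot> r"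
proof -
  have I: "I \<in> Ob" by (rule unt_obs)
  have d: "dl (A \<bullet> B) = dl B \<cdot> lu B \<cdot> (dl A \<odot> ii B)"
    by (rule del_uniq[symmetric]) (insert assms, ((rule refl | assumption | rule tyI)+))
  have "lu D \<cdot> (dl (A \<bullet> B) \<odot> ii D) \<cdot> ali A B D \<cdot> r = lu D \<cdot> ((dl B \<cdot> lu B \<cdot> (dl A \<odot> ii B)) \<odot> ii D) \<cdot> ali A B D \<cdot> r"
    using d by simp
  also have "\<dots> = lu D \<cdot> (dl B \<odot> ii D) \<cdot> ((lu B \<cdot> (dl A \<odot> ii B)) \<odot> ii D) \<cdot> ali A B D \<cdot> r"
    by (insert assms I, (subst tid_r_r; (rule refl | assumption | rule tyI)+))
  also have "\<dots> = lu D \<cdot> (dl B \<odot> ii D) \<cdot> lu (B \<bullet> D) \<cdot> (dl A \<odot> ii (B \<bullet> D)) \<cdot> r"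
    by (insert assms I, (subst rest22[OF DL3']; (rule refl | assumption | rule tyI)+))
  finally show ?thesis .
qed

lemma ms_r: assumes "r \<in> Hom Z ((X \<bullet> X) \<bullet> (Y \<bullet> Y))" "X \<in> Ob" "Y \<in> Ob"
  shows "mid_swap C X Y \<cdot> r = ali X Y (X \<bullet> Y) \<cdot> (ii X \<odot> (al Y X Y \<cdot> (sw X Y \<odot> ii Y) \<cdot> ali X Y Y)) \<cdot> al X X (Y \<bullet> Y) \<cdot> r"
proof -
  have "mid_swap C X Y \<cdot> r = (ali X Y (X \<bullet> Y) \<cdot> (ii X \<odot> (al Y X Y \<cdot> (sw X Y \<odot> ii Y) \<cdot> ali X Y Y)) \<cdot> al X X (Y \<bullet> Y)) \<cdot> r"
    by (simp add: mid_swap_def ali_def)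
  also have "\<dots> = ali X Y (X \<bullet> Y) \<cdot> ((ii X \<odot> (al Y X Y \<cdot> (sw X Y \<odot> ii Y) \<cdot> ali X Y Y)) \<cdot> al X X (Y \<bullet> Y)) \<cdot> r"
    by (insert assms, (subst assoc; (rule refl | assumption | rule tyI)+))
  also have "\<dots> = ali X Y (X \<bullet> Y) \<cdot> (ii X \<odot> (al Y X Y \<cdot> (sw X Y \<odot> ii Y) \<cdot> ali X Y Y)) \<cdot> al X X (Y \<bullet> Y) \<cdot> r"
    by (insert assms, (subst assoc; (rule refl | assumption | rule tyI)+))
  finally show ?thesis .
qed

lemma ms_hom: "X \<in> Ob \<Longrightarrow> Y \<in> Ob \<Longrightarrow> mid_swap C X Y \<in> Hom ((X \<bullet> X) \<bullet> (Y \<bullet> Y)) ((X \<bullet> Y) \<bullet> (X \<bullet> Y))"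
  unfolding mid_swap_def ali_def[symmetric] by ((rule refl | assumption | rule tyI)+)

lemma MSR: assumes r: "r \<in> Hom Z ((X \<bullet> X) \<bullet> (Y \<bullet> Y))" and X: "X \<in> Ob" and Y: "Y \<in> Ob"
  shows "ru (X \<bullet> Y) \<cdot> (ii (X \<bullet> Y) \<odot> dl (X \<bullet> Y)) \<cdot> mid_swap C X Y \<cdot> r =
    ((ru X \<cdot> (ii X \<odot> dl X)) \<odot> (ru Y \<cdot> (ii Y \<odot> dl Y))) \<cdot> r"
proof -
  have I: "I \<in> Ob" by (rule unt_obs)
  have XY: "X \<bullet> Y \<in> Ob" using X Y by (rule tob_obs)
  note o = r X Y I XY
  have G: "(ru Y \<cdot> (ii Y \<odot> dl (X \<bullet> Y))) \<cdot> al Y X Y \<cdot> (sw X Y \<odot> ii Y) \<cdot> ali X Y Y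
     = ru Y \<cdot> (ii Y \<odot> dl Y) \<cdot> lu (Y \<bullet> Y) \<cdot> (dl X \<odot> ii (Y \<bullet> Y))"
  proof -
    have "(ru Y \<cdot> (ii Y \<odot> dl (X \<bullet> Y))) \<cdot> al Y X Y \<cdot> (sw X Y \<odot> ii Y) \<cdot> ali X Y Y
      = ru Y \<cdot> (ii Y \<odot> dl (X \<bullet> Y)) \<cdot> al Y X Y \<cdot> (sw X Y \<odot> ii Y) \<cdot> ali X Y Y" by (insert o, (subst assoc; (rule refl | assumption | rule tyI)+))
    also have "\<dots> = ru Y \<cdot> (ii Y \<odot> dl Y) \<cdot> ((ru Y \<cdot> (ii Y \<odot> dl X)) \<odot> ii Y) \<cdot> (sw X Y \<odot> ii Y) \<cdot> ali X Y Y"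
      by (insert o, (subst DR3; (rule refl | assumption | rule tyI)+))
    also have "\<dots> = ru Y \<cdot> (ii Y \<odot> dl Y) \<cdot> (((ru Y \<cdot> (ii Y \<odot> dl X)) \<cdot> sw X Y) \<odot> (ii Y \<cdot> ii Y)) \<cdot> ali X Y Y"
      by (insert o, (subst ic_r; (rule refl | assumption | rule tyI)+))
    also have "\<dots> = ru Y \<cdot> (ii Y \<odot> dl Y) \<cdot> ((lu Y \<cdot> (dl X \<odot> ii Y)) \<odot> ii Y) \<cdot> ali X Y Y"
    proof -
      have "(ru Y \<cdot> (ii Y \<odot> dl X)) \<cdot> sw X Y = ru Y \<cdot> (ii Y \<odot> dl X) \<cdot> sw X Y" by (insert o, (subst assoc; (rule refl | assumption | rule tyI)+))
      then show ?thesis using SWR_c[OF X Y] idl[OF id_hom[OF Y]] by simp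
    qed
    also have "\<dots> = ru Y \<cdot> (ii Y \<odot> dl Y) \<cdot> lu (Y \<bullet> Y) \<cdot> (dl X \<odot> ii (Y \<bullet> Y))" by (insert o, (subst DL3'; (rule refl | assumption | rule tyI)+))
    finally show ?thesis .
  qed
  have "ru (X \<bullet> Y) \<cdot> (ii (X \<bullet> Y) \<odot> dl (X \<bullet> Y)) \<cdot> mid_swap C X Y \<cdot> r =
     ru (X \<bullet> Y) \<cdot> (ii (X \<bullet> Y) \<odot> dl (X \<bullet> Y)) \<cdot> ali X Y (X \<bullet> Y) \<cdot> (ii X \<odot> (al Y X Y \<cdot> (sw X Y \<odot> ii Y) \<cdot> ali X Y Y)) \<cdot> al X X (Y \<bullet> Y) \<cdot> r"
    using ms_r[OF o(1-3)] by simp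
  also have "\<dots> = ru (X \<bullet> Y) \<cdot> ((ii X \<odot> ii Y) \<odot> dl (X \<bullet> Y)) \<cdot> ali X Y (X \<bullet> Y) \<cdot> (ii X \<odot> (al Y X Y \<cdot> (sw X Y \<odot> ii Y) \<cdot> ali X Y Y)) \<cdot> al X X (Y \<bullet> Y) \<cdot> r"
    using tmr_id[OF X Y] by simp
  also have "\<dots> = ru (X \<bullet> Y) \<cdot> ali X Y I \<cdot> (ii X \<odot> (ii Y \<odot> dl (X \<bullet> Y))) \<cdot> (ii X \<odot> (al Y X Y \<cdot> (sw X Y \<odot> ii Y) \<cdot> ali X Y Y)) \<cdot> al X X (Y \<bullet> Y) \<cdot> r"
    by (insert o, (subst rest22[OF nat_ali[symmetric]]; (rule refl | assumption | rule tyI)+))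
  also have "\<dots> = (ii X \<odot> ru Y) \<cdot> (ii X \<odot> (ii Y \<odot> dl (X \<bullet> Y))) \<cdot> (ii X \<odot> (al Y X Y \<cdot> (sw X Y \<odot> ii Y) \<cdot> ali X Y Y)) \<cdot> al X X (Y \<bullet> Y) \<cdot> r"
    by (insert o, (subst rest2[OF K3_inv]; (rule refl | assumption | rule tyI)+))
  also have "\<dots> = ((ii X \<cdot> ii X) \<odot> (ru Y \<cdot> (ii Y \<odot> dl (X \<bullet> Y)))) \<cdot> (ii X \<odot> (al Y X Y \<cdot> (sw X Y \<odot> ii Y) \<cdot> ali X Y Y)) \<cdot> al X X (Y \<bullet> Y) \<cdot> r"
    by (insert o, (subst ic_r; (rule refl | assumption | rule tyI)+))
  also have "\<dots> = (ii X \<odot> (ru Y \<cdot> (ii Y \<odot> dl (X \<bullet> Y)))) \<cdot> (ii X \<odot> (al Y X Y \<cdot> (sw X Y \<odot> ii Y) \<cdot> ali X Y Y)) \<cdot> al X X (Y \<bullet> Y) \<cdot> r"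
    using idl[OF id_hom[OF X]] by simp
  also have "\<dots> = ((ii X \<cdot> ii X) \<odot> ((ru Y \<cdot> (ii Y \<odot> dl (X \<bullet> Y))) \<cdot> al Y X Y \<cdot> (sw X Y \<odot> ii Y) \<cdot> ali X Y Y)) \<cdot> al X X (Y \<bullet> Y) \<cdot> r"
    by (insert o, (subst ic_r; (rule refl | assumption | rule tyI)+))
  also have "\<dots> = (ii X \<odot> (ru Y \<cdot> (ii Y \<odot> dl Y) \<cdot> lu (Y \<bullet> Y) \<cdot> (dl X \<odot> ii (Y \<bullet> Y)))) \<cdot> al X X (Y \<bullet> Y) \<cdot> r"
    using G idl[OF id_hom[OF X]] by simp
  also have "\<dots> = (ii X \<odot> (ru Y \<cdot> (ii Y \<odot> dl Y))) \<cdot> (ii X \<odot> (lu (Y \<bullet> Y) \<cdot> (dl X \<odot> ii (Y \<bullet> Y)))) \<cdot> al X X (Y \<bullet> Y) \<cdot> r"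
  proof -
    have "(ii X \<odot> (ru Y \<cdot> (ii Y \<odot> dl Y))) \<cdot> (ii X \<odot> (lu (Y \<bullet> Y) \<cdot> (dl X \<odot> ii (Y \<bullet> Y)))) \<cdot> al X X (Y \<bullet> Y) \<cdot> r
       = ((ii X \<cdot> ii X) \<odot> ((ru Y \<cdot> (ii Y \<odot> dl Y)) \<cdot> (lu (Y \<bullet> Y) \<cdot> (dl X \<odot> ii (Y \<bullet> Y))))) \<cdot> al X X (Y \<bullet> Y) \<cdot> r"
      by (insert o, (subst ic_r; (rule refl | assumption | rule tyI)+))
    moreover have "(ru Y \<cdot> (ii Y \<odot> dl Y)) \<cdot> (lu (Y \<bullet> Y) \<cdot> (dl X \<odot> ii (Y \<bullet> Y))) = ru Y \<cdot> (ii Y \<odot> dl Y) \<cdot> lu (Y \<bullet> Y) \<cdot> (dl X \<odot> ii (Y \<bullet> Y))"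
      by (insert o, (subst assoc; (rule refl | assumption | rule tyI)+))
    ultimately show ?thesis using idl[OF id_hom[OF X]] by simp
  qed
  also have "\<dots> = (ii X \<odot> (ru Y \<cdot> (ii Y \<odot> dl Y))) \<cdot> ((ru X \<cdot> (ii X \<odot> dl X)) \<odot> ii (Y \<bullet> Y)) \<cdot> r"
    by (insert o, (subst DL3; (rule refl | assumption | rule tyI)+))
  also have "\<dots> = ((ii X \<cdot> (ru X \<cdot> (ii X \<odot> dl X))) \<odot> ((ru Y \<cdot> (ii Y \<odot> dl Y)) \<cdot> ii (Y \<bullet> Y))) \<cdot> r"
    by (insert o, (subst ic_r; (rule refl | assumption | rule tyI)+))
  also have "\<dots> = ((ru X \<cdot> (ii X \<odot> dl X)) \<odot> (ru Y \<cdot> (ii Y \<odot> dl Y))) \<cdot> r"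
  proof -
    have "ii X \<cdot> (ru X \<cdot> (ii X \<odot> dl X)) = ru X \<cdot> (ii X \<odot> dl X)" by (insert o, (subst idl; (rule refl | assumption | rule tyI)+))
    moreover have "(ru Y \<cdot> (ii Y \<odot> dl Y)) \<cdot> ii (Y \<bullet> Y) = ru Y \<cdot> (ii Y \<odot> dl Y)" by (insert o, (subst idr; (rule refl | assumption | rule tyI)+))
    ultimately show ?thesis by simp
  qed
  finally show ?thesis .
qed

lemma MSL: assumes r: "r \<in> Hom Z ((X \<bullet> X) \<bullet> (Y \<bullet> Y))" and X: "X \<in> Ob" and Y: "Y \<in> Ob"
  shows "lu (X \<bullet> Y) \<cdot> (dl (X \<bullet> Y) \<odot> ii (X \<bullet> Y)) \<cdot> mid_swap C X Y \<cdot> r =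
    ((lu X \<cdot> (dl X \<odot> ii X)) \<odot> (lu Y \<cdot> (dl Y \<odot> ii Y))) \<cdot> r"
proof -
  have I: "I \<in> Ob" by (rule unt_obs)
  have XY: "X \<bullet> Y \<in> Ob" using X Y by (rule tob_obs)
  note o = r X Y I XY
  have "lu (X \<bullet> Y) \<cdot> (dl (X \<bullet> Y) \<odot> ii (X \<bullet> Y)) \<cdot> mid_swap C X Y \<cdot> r =
     lu (X \<bullet> Y) \<cdot> (dl (X \<bullet> Y) \<odot> ii (X \<bullet> Y)) \<cdot> ali X Y (X \<bullet> Y) \<cdot> (ii X \<odot> (al Y X Y \<cdot> (sw X Y \<odot> ii Y) \<cdot> ali X Y Y)) \<cdot> al X X (Y \<bullet> Y) \<cdot> r"
    using ms_r[OF o(1-3)] by simp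
  also have "\<dots> = lu (X \<bullet> Y) \<cdot> (dl Y \<odot> ii (X \<bullet> Y)) \<cdot> lu (Y \<bullet> (X \<bullet> Y)) \<cdot> (dl X \<odot> ii (Y \<bullet> (X \<bullet> Y))) \<cdot> (ii X \<odot> (al Y X Y \<cdot> (sw X Y \<odot> ii Y) \<cdot> ali X Y Y)) \<cdot> al X X (Y \<bullet> Y) \<cdot> r"
    by (insert o, (subst EL; (rule refl | assumption | rule tyI)+))
  also have "\<dots> = lu (X \<bullet> Y) \<cdot> (dl Y \<odot> ii (X \<bullet> Y)) \<cdot> lu (Y \<bullet> (X \<bullet> Y)) \<cdot> (ii I \<odot> (al Y X Y \<cdot> (sw X Y \<odot> ii Y) \<cdot> ali X Y Y)) \<cdot> (dl X \<odot> ii (X \<bullet> (Y \<bullet> Y))) \<cdot> al X X (Y \<bullet> Y) \<cdot> r"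
    by (insert o, (subst slide_r; (rule refl | assumption | rule tyI)+))
  also have "\<dots> = lu (X \<bullet> Y) \<cdot> (dl Y \<odot> ii (X \<bullet> Y)) \<cdot> (al Y X Y \<cdot> (sw X Y \<odot> ii Y) \<cdot> ali X Y Y) \<cdot> lu (X \<bullet> (Y \<bullet> Y)) \<cdot> (dl X \<odot> ii (X \<bullet> (Y \<bullet> Y))) \<cdot> al X X (Y \<bullet> Y) \<cdot> r"
    by (insert o, (subst rest22[OF nat_lun]; (rule refl | assumption | rule tyI)+))
  also have "\<dots> = lu (X \<bullet> Y) \<cdot> (dl Y \<odot> ii (X \<bullet> Y)) \<cdot> al Y X Y \<cdot> ((sw X Y \<odot> ii Y) \<cdot> ali X Y Y) \<cdot> lu (X \<bullet> (Y \<bullet> Y)) \<cdot> (dl X \<odot> ii (X \<bullet> (Y \<bullet> Y))) \<cdot> al X X (Y \<bullet> Y) \<cdot> r"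
    by (insert o, (subst assoc; (rule refl | assumption | rule tyI)+))
  also have "\<dots> = lu (X \<bullet> Y) \<cdot> (dl Y \<odot> ii (X \<bullet> Y)) \<cdot> al Y X Y \<cdot> (sw X Y \<odot> ii Y) \<cdot> ali X Y Y \<cdot> lu (X \<bullet> (Y \<bullet> Y)) \<cdot> (dl X \<odot> ii (X \<bullet> (Y \<bullet> Y))) \<cdot> al X X (Y \<bullet> Y) \<cdot> r"
    by (insert o, (subst assoc; (rule refl | assumption | rule tyI)+))
  also have "\<dots> = lu (X \<bullet> Y) \<cdot> (dl Y \<odot> ii (X \<bullet> Y)) \<cdot> al Y X Y \<cdot> (sw X Y \<odot> ii Y) \<cdot> ali X Y Y \<cdot> ((lu X \<cdot> (dl X \<odot> ii X)) \<odot> ii (Y \<bullet> Y)) \<cdot> r"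
    by (insert o, (subst EL2; (rule refl | assumption | rule tyI)+))
  also have "\<dots> = ((lu X \<cdot> (dl Y \<odot> ii X)) \<odot> ii Y) \<cdot> (sw X Y \<odot> ii Y) \<cdot> ali X Y Y \<cdot> ((lu X \<cdot> (dl X \<odot> ii X)) \<odot> ii (Y \<bullet> Y)) \<cdot> r"
    by (insert o, (subst EL2; (rule refl | assumption | rule tyI)+))
  also have "\<dots> = (((lu X \<cdot> (dl Y \<odot> ii X)) \<cdot> sw X Y) \<odot> (ii Y \<cdot> ii Y)) \<cdot> ali X Y Y \<cdot> ((lu X \<cdot> (dl X \<odot> ii X)) \<odot> ii (Y \<bullet> Y)) \<cdot> r"
    by (insert o, (subst ic_r; (rule refl | assumption | rule tyI)+))
  also have "\<dots> = ((ru X \<cdot> (ii X \<odot> dl Y)) \<odot> ii Y) \<cdot> ali X Y Y \<cdot> ((lu X \<cdot> (dl X \<odot> ii X)) \<odot> ii (Y \<bullet> Y)) \<cdot> r"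
  proof -
    have "(lu X \<cdot> (dl Y \<odot> ii X)) \<cdot> sw X Y = lu X \<cdot> (dl Y \<odot> ii X) \<cdot> sw X Y" by (insert o, (subst assoc; (rule refl | assumption | rule tyI)+))
    then show ?thesis using SWL_c[OF X Y] idl[OF id_hom[OF Y]] by simp
  qed
  also have "\<dots> = (ii X \<odot> (lu Y \<cdot> (dl Y \<odot> ii Y))) \<cdot> ((lu X \<cdot> (dl X \<odot> ii X)) \<odot> ii (Y \<bullet> Y)) \<cdot> r"
    by (insert o, (subst rest2[OF DR']; (rule refl | assumption | rule tyI)+))
  also have "\<dots> = ((ii X \<cdot> (lu X \<cdot> (dl X \<odot> ii X))) \<odot> ((lu Y \<cdot> (dl Y \<odot> ii Y)) \<cdot> ii (Y \<bullet> Y))) \<cdot> r"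
    by (insert o, (subst ic_r; (rule refl | assumption | rule tyI)+))
  also have "\<dots> = ((lu X \<cdot> (dl X \<odot> ii X)) \<odot> (lu Y \<cdot> (dl Y \<odot> ii Y))) \<cdot> r"
  proof -
    have "ii X \<cdot> (lu X \<cdot> (dl X \<odot> ii X)) = lu X \<cdot> (dl X \<odot> ii X)" by (insert o, (subst idl; (rule refl | assumption | rule tyI)+))
    moreover have "(lu Y \<cdot> (dl Y \<odot> ii Y)) \<cdot> ii (Y \<bullet> Y) = lu Y \<cdot> (dl Y \<odot> ii Y)" by (insert o, (subst idr; (rule refl | assumption | rule tyI)+))
    ultimately show ?thesis by simp
  qed
  finally show ?thesis .
qed

lemma assoc_l: "a \<cdot> b \<cdot> c = x \<Longrightarrow> c \<in> Hom A B \<Longrightarrow> b \<in> Hom B D \<Longrightarrow> a \<in> Hom D E \<Longrightarrow> (a \<cdot> b) \<cdot> c = x"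
  using assoc by metis

definition good where
  "good X c \<longleftrightarrow> c \<in> Hom X (X \<bullet> X) \<and> ru X \<cdot> (ii X \<odot> dl X) \<cdot> c = ii X \<and>
     lu X \<cdot> (dl X \<odot> ii X) \<cdot> c = ii X \<and> initial_dilation C (ii X) X X X c"

lemma uniq: assumes init: "initial_dilation C (ii X) X X X c" and lc: "lu X \<cdot> (dl X \<odot> ii X) \<cdot> c = ii X"
  and d': "dilation C (ii X) X X X c'" and lc': "lu X \<cdot> (dl X \<odot> ii X) \<cdot> c' = ii X"
  shows "c' = c"
proof -
  have X: "X \<in> Ob" and c: "c \<in> Hom X (X \<bullet> X)"
    using init hom_obs unfolding initial_dilation_def dilation_def by auto
  obtain f where f: "f \<in> Hom X X" "(ii X \<odot> f) \<cdot> c = c'"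
    using init d' unfolding initial_dilation_def by blast
  have "ii X = lu X \<cdot> (dl X \<odot> ii X) \<cdot> (ii X \<odot> f) \<cdot> c" using lc' f by simp
  also have "\<dots> = f \<cdot> lu X \<cdot> (dl X \<odot> ii X) \<cdot> c" by (insert f(1) c X, (subst LM; (rule refl | assumption | rule tyI)+))
  also have "\<dots> = f" using lc idr[OF f(1)] by simp
  finally have "f = ii X" by simp
  then show ?thesis using f(2) tmr_id[OF X X] idl[OF c] by simp
qed

lemma good_uniq: assumes "good X c" "c' \<in> Hom X (X \<bullet> X)" "ru X \<cdot> (ii X \<odot> dl X) \<cdot> c' = ii X"
  "lu X \<cdot> (dl X \<odot> ii X) \<cdot> c' = ii X"
  shows "c' = c"
proof (rule uniq)
  show "initial_dilation C (ii X) X X X c" "lu X \<cdot> (dl X \<odot> ii X) \<cdot> c = ii X" using assms(1) unfolding good_def by auto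
  show "dilation C (ii X) X X X c'" unfolding dilation_def using assms hom_obs by auto
  show "lu X \<cdot> (dl X \<odot> ii X) \<cdot> c' = ii X" by fact
qed

lemma key_dil: assumes h: "h \<in> Hom X E'" and f: "f \<in> Hom E X" and m: "m \<in> Hom X E" and fm: "f \<cdot> m = ii X"
  and rho: "rho \<in> Hom Z ((X \<bullet> X) \<bullet> F)" and X: "X \<in> Ob" and F: "F \<in> Ob"
  shows "((ii X \<odot> (h \<cdot> f)) \<odot> ii F) \<cdot> ((ii X \<odot> m) \<odot> ii F) \<cdot> rho = ((ii X \<odot> h) \<odot> ii F) \<cdot> rho"
proof -
  have "((ii X \<odot> (h \<cdot> f)) \<odot> ii F) \<cdot> ((ii X \<odot> m) \<odot> ii F) \<cdot> rho = (((ii X \<odot> (h \<cdot> f)) \<cdot> (ii X \<odot> m)) \<odot> (ii F \<cdot> ii F)) \<cdot> rho"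
    by (insert h f m rho X F, (subst ic_r; (rule refl | assumption | rule tyI)+))
  also have "\<dots> = (((ii X \<cdot> ii X) \<odot> ((h \<cdot> f) \<cdot> m)) \<odot> (ii F \<cdot> ii F)) \<cdot> rho"
    by (insert h f m rho X F, (subst ic; (rule refl | assumption | rule tyI)+))
  also have "\<dots> = (((ii X \<cdot> ii X) \<odot> (h \<cdot> f \<cdot> m)) \<odot> (ii F \<cdot> ii F)) \<cdot> rho"
    by (insert h f m rho X F, (subst assoc; (rule refl | assumption | rule tyI)+))
  also have "\<dots> = ((ii X \<odot> h) \<odot> ii F) \<cdot> rho"
    using fm idl[OF id_hom[OF X]] idl[OF id_hom[OF F]] idr[OF h] by simp
  finally show ?thesis .
qed

lemma stepA: assumes X: "X \<in> Ob" and init: "initial_dilation C (ii X) X X E iota"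
  and nc: "non_creative C (marginal C X E iota) X E"
  shows "\<exists>c. good X c"
proof -
  have I: "I \<in> Ob" by (rule unt_obs)
  have E: "E \<in> Ob" and iota: "iota \<in> Hom X (X \<bullet> E)" and ri: "ru X \<cdot> (ii X \<odot> dl E) \<cdot> iota = ii X"
    using init unfolding initial_dilation_def dilation_def by auto
  define m where "m = lu E \<cdot> (dl X \<odot> ii E) \<cdot> iota"
  have m: "m \<in> Hom X E" unfolding m_def by (insert X E iota, ((rule refl | assumption | rule tyI)+))
  have pd: "dilation C m X E X (sw X E \<cdot> iota)"
    unfolding dilation_def
  proof (intro conjI)
    show "X \<in> Ob" by fact
    show "sw X E \<cdot> iota \<in> Hom X (E \<bullet> X)" by (insert X E iota, ((rule refl | assumption | rule tyI)+))
    show "ru E \<cdot> (ii E \<odot> dl X) \<cdot> sw X E \<cdot> iota = m" unfolding m_def by (rule SWR[OF iota X E])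
  qed
  obtain kappa where kd: "dilation C (ii X) X X X kappa" and pk: "sw X E \<cdot> iota = (m \<odot> ii X) \<cdot> kappa"
    using nc pd unfolding non_creative_def marginal_def m_def by blast
  have kappa: "kappa \<in> Hom X (X \<bullet> X)" and rk: "ru X \<cdot> (ii X \<odot> dl X) \<cdot> kappa = ii X"
    using kd unfolding dilation_def by auto
  define c where "c = sw X X \<cdot> kappa"
  have c: "c \<in> Hom X (X \<bullet> X)" unfolding c_def by (insert X kappa, ((rule refl | assumption | rule tyI)+))
  have hi: "iota = (ii X \<odot> m) \<cdot> c"
  proof -
    have "iota = ii (X \<bullet> E) \<cdot> iota" using idl[OF iota] by simp
    also have "\<dots> = (sw E X \<cdot> sw X E) \<cdot> iota" using symm[OF X E] by simp
    also have "\<dots> = sw E X \<cdot> sw X E \<cdot> iota" by (insert X E iota, (subst assoc; (rule refl | assumption | rule tyI)+))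
    also have "\<dots> = sw E X \<cdot> (m \<odot> ii X) \<cdot> kappa" using pk by simp
    also have "\<dots> = (ii X \<odot> m) \<cdot> sw X X \<cdot> kappa" by (insert m X E kappa, (subst rest22[OF nat_swp]; (rule refl | assumption | rule tyI)+))
    finally show ?thesis unfolding c_def .
  qed
  have lc: "lu X \<cdot> (dl X \<odot> ii X) \<cdot> c = ii X" unfolding c_def using SWL[OF kappa X X] rk by simp
  have rc: "ru X \<cdot> (ii X \<odot> dl X) \<cdot> c = ii X"
  proof -
    have "ru X \<cdot> (ii X \<odot> dl X) \<cdot> c = ru X \<cdot> (ii X \<odot> dl E) \<cdot> (ii X \<odot> m) \<cdot> c" using RM[OF m c X] by simp
    also have "\<dots> = ii X" using hi[symmetric] ri by simp
    finally show ?thesis .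
  qed
  have cd: "dilation C (ii X) X X X c" unfolding dilation_def using X c rc by auto
  obtain f where f: "f \<in> Hom E X" "(ii X \<odot> f) \<cdot> iota = c"
    using init cd unfolding initial_dilation_def by blast
  have fm: "f \<cdot> m = ii X"
  proof -
    have "c = (ii X \<odot> f) \<cdot> (ii X \<odot> m) \<cdot> c" using f(2) hi by simp
    also have "\<dots> = ((ii X \<cdot> ii X) \<odot> (f \<cdot> m)) \<cdot> c" by (insert f(1) m c X, (subst ic_r; (rule refl | assumption | rule tyI)+))
    also have "\<dots> = (ii X \<odot> (f \<cdot> m)) \<cdot> c" using idl[OF id_hom[OF X]] by simp
    finally have cc: "c = (ii X \<odot> (f \<cdot> m)) \<cdot> c" .
    have "ii X = lu X \<cdot> (dl X \<odot> ii X) \<cdot> (ii X \<odot> (f \<cdot> m)) \<cdot> c" using lc cc by simp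
    also have "\<dots> = (f \<cdot> m) \<cdot> lu X \<cdot> (dl X \<odot> ii X) \<cdot> c" by (insert f(1) m c X, (subst LM; (rule refl | assumption | rule tyI)+))
    also have "\<dots> = f \<cdot> m" using lc idr[OF cmp_hom[OF m f(1)]] by simp
    finally show ?thesis by simp
  qed
  have "initial_dilation C (ii X) X X X c"
    unfolding initial_dilation_def
  proof (intro conjI allI impI)
    show "dilation C (ii X) X X X c" by fact
    fix E' pi' assume pi': "dilation C (ii X) X X E' pi'"
    obtain g0 where g0: "g0 \<in> Hom E E'" "(ii X \<odot> g0) \<cdot> iota = pi'"
      using init pi' unfolding initial_dilation_def by blast
    show "\<exists>g\<in>Hom X E'. (ii X \<odot> g) \<cdot> c = pi'"
    proof (rule bexI[of _ "g0 \<cdot> m"])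
      show "g0 \<cdot> m \<in> Hom X E'" by (insert m g0(1), ((rule refl | assumption | rule tyI)+))
      have "(ii X \<odot> (g0 \<cdot> m)) \<cdot> c = (ii X \<odot> g0) \<cdot> (ii X \<odot> m) \<cdot> c" by (insert m g0(1) c X, (subst tid_l_r; (rule refl | assumption | rule tyI)+))
      then show "(ii X \<odot> (g0 \<cdot> m)) \<cdot> c = pi'" using hi g0(2) by simp
    qed
    show "\<forall>h1\<in>Hom X E'. \<forall>h2\<in>Hom X E'. (ii X \<odot> h1) \<cdot> c = pi' \<longrightarrow> (ii X \<odot> h2) \<cdot> c = pi' \<longrightarrow> dil_equal C c X X X h1 h2"
    proof (intro ballI impI)
      fix h1 h2 assume h1: "h1 \<in> Hom X E'" and h2: "h2 \<in> Hom X E'"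
        and e1: "(ii X \<odot> h1) \<cdot> c = pi'" and e2: "(ii X \<odot> h2) \<cdot> c = pi'"
      have hf: "(ii X \<odot> (h \<cdot> f)) \<cdot> iota = pi'" if h: "h \<in> Hom X E'" "(ii X \<odot> h) \<cdot> c = pi'" for h
      proof -
        have "(ii X \<odot> (h \<cdot> f)) \<cdot> iota = (ii X \<odot> h) \<cdot> (ii X \<odot> f) \<cdot> iota" by (insert h(1) f(1) iota X, (subst tid_l_r; (rule refl | assumption | rule tyI)+))
        then show ?thesis using f(2) h(2) by simp
      qed
      have de: "dil_equal C iota X X E (h1 \<cdot> f) (h2 \<cdot> f)"
        using init pi' hf[OF h1 e1] hf[OF h2 e2] cmp_hom[OF f(1) h1] cmp_hom[OF f(1) h2]
        unfolding initial_dilation_def by blast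
      show "dil_equal C c X X X h1 h2"
        unfolding dil_equal_def
      proof (intro allI impI)
        fix F rho assume rd: "dilation C c X (X \<bullet> X) F rho"
        have F: "F \<in> Ob" and rho: "rho \<in> Hom X ((X \<bullet> X) \<bullet> F)" and rr: "ru (X \<bullet> X) \<cdot> (ii (X \<bullet> X) \<odot> dl F) \<cdot> rho = c"
          using rd unfolding dilation_def by auto
        have XX: "X \<bullet> X \<in> Ob" "X \<bullet> E \<in> Ob" using X E by (auto intro: tob_obs)
        have rd': "dilation C iota X (X \<bullet> E) F (((ii X \<odot> m) \<odot> ii F) \<cdot> rho)"
          unfolding dilation_def
        proof (intro conjI)
          show "F \<in> Ob" by fact
          show "((ii X \<odot> m) \<odot> ii F) \<cdot> rho \<in> Hom X ((X \<bullet> E) \<bullet> F)" by (insert X m F rho, ((rule refl | assumption | rule tyI)+))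
          have "ru (X \<bullet> E) \<cdot> (ii (X \<bullet> E) \<odot> dl F) \<cdot> ((ii X \<odot> m) \<odot> ii F) \<cdot> rho
             = ru (X \<bullet> E) \<cdot> ((ii X \<odot> m) \<odot> ii I) \<cdot> (ii (X \<bullet> X) \<odot> dl F) \<cdot> rho"
            by (insert X m F rho I XX, (subst slide_r[symmetric]; (rule refl | assumption | rule tyI)+))
          also have "\<dots> = (ii X \<odot> m) \<cdot> ru (X \<bullet> X) \<cdot> (ii (X \<bullet> X) \<odot> dl F) \<cdot> rho"
            by (insert X m F rho I XX, (subst rest22[OF nat_run]; (rule refl | assumption | rule tyI)+))
          also have "\<dots> = iota" using rr hi by simp
          finally show "ru (X \<bullet> E) \<cdot> (ii (X \<bullet> E) \<odot> dl F) \<cdot> ((ii X \<odot> m) \<odot> ii F) \<cdot> rho = iota" .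
        qed
        have "((ii X \<odot> (h1 \<cdot> f)) \<odot> ii F) \<cdot> ((ii X \<odot> m) \<odot> ii F) \<cdot> rho = ((ii X \<odot> (h2 \<cdot> f)) \<odot> ii F) \<cdot> ((ii X \<odot> m) \<odot> ii F) \<cdot> rho"
          using de rd' unfolding dil_equal_def by blast
        then show "((ii X \<odot> h1) \<odot> ii F) \<cdot> rho = ((ii X \<odot> h2) \<odot> ii F) \<cdot> rho"
          using key_dil[OF h1 f(1) m fm rho X F] key_dil[OF h2 f(1) m fm rho X F] by simp
      qed
    qed
  qed
  then have "good X c" unfolding good_def using c rc lc by auto
  then show ?thesis by blast
qed

lemma good_comm: assumes g: "good X c" shows "sw X X \<cdot> c = c"
proof -
  have c: "c \<in> Hom X (X \<bullet> X)" and rc: "ru X \<cdot> (ii X \<odot> dl X) \<cdot> c = ii X" and lc: "lu X \<cdot> (dl X \<odot> ii X) \<cdot> c = ii X"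
    using g unfolding good_def by auto
  have X: "X \<in> Ob" using hom_obs c by auto
  show ?thesis
  proof (rule good_uniq[OF g])
    show "sw X X \<cdot> c \<in> Hom X (X \<bullet> X)" by (insert X c, ((rule refl | assumption | rule tyI)+))
    show "ru X \<cdot> (ii X \<odot> dl X) \<cdot> sw X X \<cdot> c = ii X" using SWR[OF c X X] lc by simp
    show "lu X \<cdot> (dl X \<odot> ii X) \<cdot> sw X X \<cdot> c = ii X" using SWL[OF c X X] rc by simp
  qed
qed

lemma good_coassoc: assumes g: "good X c" shows "al X X X \<cdot> (c \<odot> ii X) \<cdot> c = (ii X \<odot> c) \<cdot> c"
proof -
  have c: "c \<in> Hom X (X \<bullet> X)" and rc: "ru X \<cdot> (ii X \<odot> dl X) \<cdot> c = ii X" and lc: "lu X \<cdot> (dl X \<odot> ii X) \<cdot> c = ii X"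
    and init: "initial_dilation C (ii X) X X X c"
    using g unfolding good_def by auto
  have X: "X \<in> Ob" using hom_obs c by auto
  have I: "I \<in> Ob" by (rule unt_obs)
  have XX: "X \<bullet> X \<in> Ob" using X X by (rule tob_obs)
  have rc2: "(ru X \<cdot> (ii X \<odot> dl X)) \<cdot> c = ii X" by (rule assoc_l[OF rc]) (insert X c, ((rule refl | assumption | rule tyI)+))
  have lc2: "(lu X \<cdot> (dl X \<odot> ii X)) \<cdot> c = ii X" by (rule assoc_l[OF lc]) (insert X c, ((rule refl | assumption | rule tyI)+))
  have ud: "dilation C (ii X) X X (X \<bullet> X) (al X X X \<cdot> (c \<odot> ii X) \<cdot> c)"
    unfolding dilation_def
  proof (intro conjI)
    show "X \<bullet> X \<in> Ob" by fact
    show "al X X X \<cdot> (c \<odot> ii X) \<cdot> c \<in> Hom X (X \<bullet> (X \<bullet> X))" by (insert X c, ((rule refl | assumption | rule tyI)+))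
    have "ru X \<cdot> (ii X \<odot> dl (X \<bullet> X)) \<cdot> al X X X \<cdot> (c \<odot> ii X) \<cdot> c
       = ru X \<cdot> (ii X \<odot> dl X) \<cdot> ((ru X \<cdot> (ii X \<odot> dl X)) \<odot> ii X) \<cdot> (c \<odot> ii X) \<cdot> c" by (insert X c, (subst DR3; (rule refl | assumption | rule tyI)+))
    also have "\<dots> = ru X \<cdot> (ii X \<odot> dl X) \<cdot> (((ru X \<cdot> (ii X \<odot> dl X)) \<cdot> c) \<odot> (ii X \<cdot> ii X)) \<cdot> c" by (insert X c, (subst ic_r; (rule refl | assumption | rule tyI)+))
    also have "\<dots> = ru X \<cdot> (ii X \<odot> dl X) \<cdot> c" using rc2 idl[OF id_hom[OF X]] tmr_id[OF X X] idl[OF c] by simp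
    also have "\<dots> = ii X" by fact
    finally show "ru X \<cdot> (ii X \<odot> dl (X \<bullet> X)) \<cdot> al X X X \<cdot> (c \<odot> ii X) \<cdot> c = ii X" .
  qed
  obtain f where f: "f \<in> Hom X (X \<bullet> X)" "(ii X \<odot> f) \<cdot> c = al X X X \<cdot> (c \<odot> ii X) \<cdot> c"
    using init ud unfolding initial_dilation_def by blast
  have "f = f \<cdot> lu X \<cdot> (dl X \<odot> ii X) \<cdot> c" using lc idr[OF f(1)] by simp
  also have "\<dots> = lu (X \<bullet> X) \<cdot> (dl X \<odot> ii (X \<bullet> X)) \<cdot> (ii X \<odot> f) \<cdot> c" by (insert X c f(1), (subst LM[symmetric]; (rule refl | assumption | rule tyI)+))
  also have "\<dots> = lu (X \<bullet> X) \<cdot> (dl X \<odot> ii (X \<bullet> X)) \<cdot> al X X X \<cdot> (c \<odot> ii X) \<cdot> c" using f(2) by simp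
  also have "\<dots> = ((lu X \<cdot> (dl X \<odot> ii X)) \<odot> ii X) \<cdot> (c \<odot> ii X) \<cdot> c" by (insert X c, (subst EL2; (rule refl | assumption | rule tyI)+))
  also have "\<dots> = (((lu X \<cdot> (dl X \<odot> ii X)) \<cdot> c) \<odot> (ii X \<cdot> ii X)) \<cdot> c" by (insert X c, (subst ic_r; (rule refl | assumption | rule tyI)+))
  also have "\<dots> = c" using lc2 idl[OF id_hom[OF X]] tmr_id[OF X X] idl[OF c] by simp
  finally have "f = c" .
  then show ?thesis using f(2) by simp
qed

lemma good_tensor: assumes gX: "good X cX" and gY: "good Y cY" and gXY: "good (X \<bullet> Y) cXY"
  shows "cXY = mid_swap C X Y \<cdot> (cX \<odot> cY)"
proof -
  have cX: "cX \<in> Hom X (X \<bullet> X)" and rX: "ru X \<cdot> (ii X \<odot> dl X) \<cdot> cX = ii X" and lX: "lu X \<cdot> (dl X \<odot> ii X) \<cdot> cX = ii X"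
    using gX unfolding good_def by auto
  have cY: "cY \<in> Hom Y (Y \<bullet> Y)" and rY: "ru Y \<cdot> (ii Y \<odot> dl Y) \<cdot> cY = ii Y" and lY: "lu Y \<cdot> (dl Y \<odot> ii Y) \<cdot> cY = ii Y"
    using gY unfolding good_def by auto
  have X: "X \<in> Ob" using hom_obs cX by auto
  have Y: "Y \<in> Ob" using hom_obs cY by auto
  have rX2: "(ru X \<cdot> (ii X \<odot> dl X)) \<cdot> cX = ii X" by (rule assoc_l[OF rX]) (insert X cX, ((rule refl | assumption | rule tyI)+))
  have lX2: "(lu X \<cdot> (dl X \<odot> ii X)) \<cdot> cX = ii X" by (rule assoc_l[OF lX]) (insert X cX, ((rule refl | assumption | rule tyI)+))
  have rY2: "(ru Y \<cdot> (ii Y \<odot> dl Y)) \<cdot> cY = ii Y" by (rule assoc_l[OF rY]) (insert Y cY, ((rule refl | assumption | rule tyI)+))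
  have lY2: "(lu Y \<cdot> (dl Y \<odot> ii Y)) \<cdot> cY = ii Y" by (rule assoc_l[OF lY]) (insert Y cY, ((rule refl | assumption | rule tyI)+))
  have t: "cX \<odot> cY \<in> Hom (X \<bullet> Y) ((X \<bullet> X) \<bullet> (Y \<bullet> Y))" by (insert cX cY, ((rule refl | assumption | rule tyI)+))
  show ?thesis
  proof (rule good_uniq[OF gXY, symmetric])
    show "mid_swap C X Y \<cdot> (cX \<odot> cY) \<in> Hom (X \<bullet> Y) ((X \<bullet> Y) \<bullet> (X \<bullet> Y))"
      using cmp_hom[OF t ms_hom[OF X Y]] .
    have "ru (X \<bullet> Y) \<cdot> (ii (X \<bullet> Y) \<odot> dl (X \<bullet> Y)) \<cdot> mid_swap C X Y \<cdot> (cX \<odot> cY)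
       = ((ru X \<cdot> (ii X \<odot> dl X)) \<odot> (ru Y \<cdot> (ii Y \<odot> dl Y))) \<cdot> (cX \<odot> cY)" by (rule MSR[OF t X Y])
    also have "\<dots> = ((ru X \<cdot> (ii X \<odot> dl X)) \<cdot> cX) \<odot> ((ru Y \<cdot> (ii Y \<odot> dl Y)) \<cdot> cY)" by (insert X Y cX cY, (subst ic; (rule refl | assumption | rule tyI)+))
    also have "\<dots> = ii (X \<bullet> Y)" using rX2 rY2 tmr_id[OF X Y] by simp
    finally show "ru (X \<bullet> Y) \<cdot> (ii (X \<bullet> Y) \<odot> dl (X \<bullet> Y)) \<cdot> mid_swap C X Y \<cdot> (cX \<odot> cY) = ii (X \<bullet> Y)" .
    have "lu (X \<bullet> Y) \<cdot> (dl (X \<bullet> Y) \<odot> ii (X \<bullet> Y)) \<cdot> mid_swap C X Y \<cdot> (cX \<odot> cY)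
       = ((lu X \<cdot> (dl X \<odot> ii X)) \<odot> (lu Y \<cdot> (dl Y \<odot> ii Y))) \<cdot> (cX \<odot> cY)" by (rule MSL[OF t X Y])
    also have "\<dots> = ((lu X \<cdot> (dl X \<odot> ii X)) \<cdot> cX) \<odot> ((lu Y \<cdot> (dl Y \<odot> ii Y)) \<cdot> cY)" by (insert X Y cX cY, (subst ic; (rule refl | assumption | rule tyI)+))
    also have "\<dots> = ii (X \<bullet> Y)" using lX2 lY2 tmr_id[OF X Y] by simp
    finally show "lu (X \<bullet> Y) \<cdot> (dl (X \<bullet> Y) \<odot> ii (X \<bullet> Y)) \<cdot> mid_swap C X Y \<cdot> (cX \<odot> cY) = ii (X \<bullet> Y)" .
  qed
qed

lemma markov_from_good: assumes g: "\<forall>X \<in> Ob. good X (cpy X)" shows "markov C cpy"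
  unfolding markov_def
proof (intro conjI ballI)
  show "semicartesian C" by (rule semi)
  fix X assume X: "X \<in> Ob"
  have gX: "good X (cpy X)" using g X by blast
  then show "cpy X \<in> Hom X (X \<bullet> X)" "lu X \<cdot> (dl X \<odot> ii X) \<cdot> cpy X = ii X" "ru X \<cdot> (ii X \<odot> dl X) \<cdot> cpy X = ii X"
    unfolding good_def by auto
  show "al X X X \<cdot> (cpy X \<odot> ii X) \<cdot> cpy X = (ii X \<odot> cpy X) \<cdot> cpy X" by (rule good_coassoc[OF gX])
  show "sw X X \<cdot> cpy X = cpy X" by (rule good_comm[OF gX])
next
  fix X Y assume X: "X \<in> Ob" and Y: "Y \<in> Ob"
  show "cpy (X \<bullet> Y) = mid_swap C X Y \<cdot> (cpy X \<odot> cpy Y)"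
    using good_tensor g X Y tob_obs by blast
qed

lemma markov_good: assumes "markov C cpy" "\<forall>X \<in> Ob. initial_dilation C (ii X) X X X (cpy X)" "X \<in> Ob"
  shows "good X (cpy X)"
  using assms unfolding markov_def good_def by blast

end

theorem theorem4p19:
  fixes C :: "('o, 'm, 'z) smc_scheme"
  assumes "semicartesian C"
  shows "((\<exists>copy. markov C copy \<and>
              (\<forall>X \<in> obs C. initial_dilation C (idt C X) X X X (copy X)))
          \<longleftrightarrow>
          (\<forall>X \<in> obs C. \<exists>E \<iota>. initial_dilation C (idt C X) X X E \<iota> \<and>
              non_creative C (marginal C X E \<iota>) X E))
       \<and> (\<forall>copy1 copy2.
            markov C copy1 \<and> (\<forall>X \<in> obs C. initial_dilation C (idt C X) X X X (copy1 X)) \<and>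
            markov C copy2 \<and> (\<forall>X \<in> obs C. initial_dilation C (idt C X) X X X (copy2 X))
            \<longrightarrow> (\<forall>X \<in> obs C. copy1 X = copy2 X))"
proof -
  interpret sc C by (rule sc.intro) (rule assms)
  have part1: "(\<exists>copy. markov C copy \<and> (\<forall>X \<in> obs C. initial_dilation C (idt C X) X X X (copy X)))
      \<Longrightarrow> (\<forall>X \<in> obs C. \<exists>E \<iota>. initial_dilation C (idt C X) X X E \<iota> \<and> non_creative C (marginal C X E \<iota>) X E)"
  proof (intro ballI)
    fix X assume ex: "\<exists>copy. markov C copy \<and> (\<forall>X \<in> obs C. initial_dilation C (idt C X) X X X (copy X))"
      and X: "X \<in> obs C"
    then obtain cpy where m: "markov C cpy" and i: "\<forall>X \<in> obs C. initial_dilation C (idt C X) X X X (cpy X)" by blast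
    have gX: "good X (cpy X)" by (rule markov_good[OF m i X])
    have marg: "marginal C X X (cpy X) = ii X" using gX unfolding good_def marginal_def by auto
    have nc: "non_creative C (ii X) X X"
      unfolding non_creative_def
    proof (intro allI impI)
      fix E pi assume d: "dilation C (ii X) X X E pi"
      have E: "E \<in> Ob" and pi: "pi \<in> Hom X (X \<bullet> E)" using d unfolding dilation_def by auto
      have "pi = (ii X \<odot> ii E) \<cdot> pi" using tmr_id[OF X E] idl[OF pi] by simp
      then show "\<exists>\<iota>. dilation C (ii X) X X E \<iota> \<and> pi = (ii X \<odot> ii E) \<cdot> \<iota>" using d by blast
    qed
    show "\<exists>E \<iota>. initial_dilation C (idt C X) X X E \<iota> \<and> non_creative C (marginal C X E \<iota>) X E"
    proof (intro exI conjI)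
      show "initial_dilation C (idt C X) X X X (cpy X)" using i X by blast
      show "non_creative C (marginal C X X (cpy X)) X X" using marg nc by simp
    qed
  qed
  have part2: "(\<forall>X \<in> obs C. \<exists>E \<iota>. initial_dilation C (idt C X) X X E \<iota> \<and> non_creative C (marginal C X E \<iota>) X E)
      \<Longrightarrow> (\<exists>copy. markov C copy \<and> (\<forall>X \<in> obs C. initial_dilation C (idt C X) X X X (copy X)))"
  proof -
    assume h: "\<forall>X \<in> obs C. \<exists>E \<iota>. initial_dilation C (idt C X) X X E \<iota> \<and> non_creative C (marginal C X E \<iota>) X E"
    have ex: "\<exists>c. good X c" if X: "X \<in> Ob" for X
      using h X stepA by blast
    define cpy where "cpy X = (SOME c. good X c)" for X
    have g: "\<forall>X \<in> Ob. good X (cpy X)" unfolding cpy_def using ex someI_ex by metis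
    have "markov C cpy" by (rule markov_from_good[OF g])
    moreover have "\<forall>X \<in> obs C. initial_dilation C (idt C X) X X X (cpy X)" using g unfolding good_def by blast
    ultimately show ?thesis by blast
  qed
  have part3: "\<forall>copy1 copy2.
            markov C copy1 \<and> (\<forall>X \<in> obs C. initial_dilation C (idt C X) X X X (copy1 X)) \<and>
            markov C copy2 \<and> (\<forall>X \<in> obs C. initial_dilation C (idt C X) X X X (copy2 X))
            \<longrightarrow> (\<forall>X \<in> obs C. copy1 X = copy2 X)"
  proof (intro allI impI ballI)
    fix copy1 copy2 X
    assume a: "markov C copy1 \<and> (\<forall>X \<in> obs C. initial_dilation C (idt C X) X X X (copy1 X)) \<and>
            markov C copy2 \<and> (\<forall>X \<in> obs C. initial_dilation C (idt C X) X X X (copy2 X))" and X: "X \<in> obs C"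
    have g1: "good X (copy1 X)" using markov_good a X by blast
    have g2: "good X (copy2 X)" using markov_good a X by blast
    show "copy1 X = copy2 X" using good_uniq[OF g2] g1 unfolding good_def by blast
  qed
  show ?thesis using part1 part2 part3 by blast
qed

end
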